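(* Let $W$ be a channel from $\mathcal X$ to $\mathcal Y$. For every integer $M>0$, every real $C>0$ and every probability distribution $p$ on $\mathcal X$, there exists a resolvability code $\Psi$ with $|\Psi|=M$ and $$\epsilon(\Psi,W_p)\le 2\delta_{p,W,C}+\sqrt{\frac{\delta'_{p,W,C}}{M}},$$ and moreover $\delta'_{p,W,C}\le C$. If $\mathcal Y$ is finite, then for every $t$ with $-\tfrac12\le t<0$ there exists a resolvability code $\Psi'$ with $|\Psi'|=M$ and $$D(\Psi',W_p)\le\frac{\log\big(1+M^te^{\phi(t|W,p)}\big)}{-t},$$ and there exists a resolvability code $\Psi''$ with $|\Psi''|=M$ and $$D(\Psi'',W_p)\le\eta(\delta_{p,W,C})+\delta_{p,W,C}\log|\mathcal Y|+\frac{\delta'_{p,W,C}}{M}.$$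
   Context: A channel $W$ from a finite or countable set $\mathcal X$ to a finite or countable set $\mathcal Y$ is a map $x\mapsto W_x$ assigning a probability distribution $W_x$ on $\mathcal Y$; $W_p(y):=\sum_x p(x)W_x(y)$. A resolvability code $\Psi$ of size $|\Psi|=M$ is a tuple $(x_1,\dots,x_M)$ of elements of $\mathcal X$; its performance measures are $\epsilon(\Psi,W_p):=\sum_y\big|\frac1M\sum_{i=1}^MW_{x_i}(y)-W_p(y)\big|$ and $D(\Psi,W_p):=D\big(\frac1M\sum_{i=1}^MW_{x_i}\,\big\|\,W_p\big)$, where $D(q\|r)=\sum_y q(y)\log\frac{q(y)}{r(y)}$. Define $\delta_{p,W,C}:=\sum_x p(x)\sum_{y:\,W_x(y)>C\,W_p(y)}W_x(y)$, $\delta'_{p,W,C}:=\sum_x p(x)\sum_{y:\,W_x(y)\le C\,W_p(y),\,W_p(y)>0}\frac{W_x(y)^2}{W_p(y)}$, $\phi(t|W,p):=\log\sum_y\big(\sum_x p(x)W_x(y)^{1/(1+t)}\big)^{1+t}$, and $\eta(x):=-x\log x$. *)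

theory Defs
  imports "HOL-Analysis.Analysis" "HOL-Probability.Probability_Mass_Function"
begin

text \<open>A channel W from 'x to 'y is a map x \<mapsto> W x :: 'y pmf; an input distribution is p :: 'x pmf.
  Logarithms are natural logarithms.\<close>

definition Wp :: "'x pmf \<Rightarrow> ('x \<Rightarrow> 'y pmf) \<Rightarrow> 'y \<Rightarrow> real" where
  "Wp p W y = (\<Sum>\<^sub>\<infinity>x. pmf p x * pmf (W x) y)"

definition code_out :: "('x \<Rightarrow> 'y pmf) \<Rightarrow> 'x list \<Rightarrow> 'y \<Rightarrow> real" where
  "code_out W xs y = (\<Sum>i<length xs. pmf (W (xs ! i)) y) / real (length xs)"

definition eps_code :: "('x \<Rightarrow> 'y pmf) \<Rightarrow> 'x list \<Rightarrow> 'x pmf \<Rightarrow> real" where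
  "eps_code W xs p = (\<Sum>\<^sub>\<infinity>y. \<bar>code_out W xs y - Wp p W y\<bar>)"

definition KL :: "('y \<Rightarrow> real) \<Rightarrow> ('y \<Rightarrow> real) \<Rightarrow> ereal" where
  "KL q r = (if \<exists>y. q y > 0 \<and> r y = 0 then \<infinity>
             else ereal (\<Sum>\<^sub>\<infinity>y. if q y = 0 then 0 else q y * ln (q y / r y)))"

definition D_code :: "('x \<Rightarrow> 'y pmf) \<Rightarrow> 'x list \<Rightarrow> 'x pmf \<Rightarrow> ereal" where
  "D_code W xs p = KL (code_out W xs) (Wp p W)"

definition delta :: "'x pmf \<Rightarrow> ('x \<Rightarrow> 'y pmf) \<Rightarrow> real \<Rightarrow> real" where
  "delta p W C = (\<Sum>\<^sub>\<infinity>x. pmf p x *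
      (\<Sum>\<^sub>\<infinity>y\<in>{y. pmf (W x) y > C * Wp p W y}. pmf (W x) y))"

definition delta' :: "'x pmf \<Rightarrow> ('x \<Rightarrow> 'y pmf) \<Rightarrow> real \<Rightarrow> real" where
  "delta' p W C = (\<Sum>\<^sub>\<infinity>x. pmf p x *
      (\<Sum>\<^sub>\<infinity>y\<in>{y. pmf (W x) y \<le> C * Wp p W y \<and> Wp p W y > 0}. (pmf (W x) y)\<^sup>2 / Wp p W y))"

definition phi :: "real \<Rightarrow> ('x \<Rightarrow> 'y pmf) \<Rightarrow> 'x pmf \<Rightarrow> real" where
  "phi t W p = ln (\<Sum>\<^sub>\<infinity>y. (\<Sum>\<^sub>\<infinity>x. pmf p x * pmf (W x) y powr (1 / (1 + t))) powr (1 + t))"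

definition eta :: "real \<Rightarrow> real" where
  "eta x = - x * ln x"

end

theory Submission
  imports Defs "HOL-Probability.Product_PMF"
begin

no_notation Infinite_Set_Sum.abs_summable_on (infixr \<open>abs'_summable'_on\<close> 46)

lemma pmf_summable_on: "pmf p summable_on A"
proof -
  have "Infinite_Set_Sum.abs_summable_on (pmf p) A" by (rule pmf_abs_summable)
  then have "Infinite_Sum.abs_summable_on (pmf p) A" using abs_summable_equivalent by blast
  then show ?thesis using summable_on_iff_abs_summable_on_real by blast
qed

lemma pmf_bdd_summable_on:
  fixes f :: "'a \<Rightarrow> real"
  assumes "\<And>x. \<bar>f x\<bar> \<le> B"
  shows "(\<lambda>x. pmf p x * f x) summable_on A"
proof -
  have "(\<lambda>x. B * pmf p x) summable_on A"
    by (intro summable_on_cmult_right pmf_summable_on)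
  then have "(\<lambda>x. norm (pmf p x * f x)) summable_on A"
    by (rule summable_on_comparison_test)
       (use assms in \<open>auto simp: abs_mult mult.commute intro!: mult_right_mono\<close>)
  then show ?thesis using summable_on_iff_abs_summable_on_real by blast
qed

lemma integrable_pmf_bdd:
  fixes f :: "'a \<Rightarrow> real"
  assumes "\<And>x. \<bar>f x\<bar> \<le> B"
  shows "integrable (measure_pmf p) f"
  by (rule measure_pmf.integrable_const_bound[where B=B]) (use assms in auto)

lemma expectation_infsum:
  fixes f :: "'a \<Rightarrow> real"
  assumes "\<And>x. \<bar>f x\<bar> \<le> B"
  shows "measure_pmf.expectation p f = (\<Sum>\<^sub>\<infinity>x. pmf p x * f x)"
proof -
  have "(\<lambda>x. norm (pmf p x * f x)) summable_on UNIV"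
    using pmf_bdd_summable_on[of "\<lambda>x. \<bar>f x\<bar>" B p UNIV] assms by (simp add: abs_mult)
  then have "Infinite_Set_Sum.abs_summable_on (\<lambda>x. pmf p x * f x) UNIV"
    using abs_summable_equivalent by blast
  then show ?thesis
    by (simp add: pmf_expectation_eq_infsetsum infsetsum_infsum)
qed

lemma ennreal_infsum_nn:
  fixes f :: "'a \<Rightarrow> real"
  assumes "f summable_on A" "\<And>x. x \<in> A \<Longrightarrow> f x \<ge> 0"
  shows "ennreal (infsum f A) = (\<integral>\<^sup>+x. ennreal (f x) \<partial>count_space A)"
proof -
  have "Infinite_Sum.abs_summable_on f A" using assms(1) summable_on_iff_abs_summable_on_real by blast
  then have a: "Infinite_Set_Sum.abs_summable_on f A" using abs_summable_equivalent by blast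
  show ?thesis using nn_integral_conv_infsetsum[OF a assms(2)] infsetsum_infsum[OF a] by simp
qed

lemma infsum_nn_finite:
  fixes f :: "'a \<Rightarrow> real"
  assumes "(\<integral>\<^sup>+x. ennreal (f x) \<partial>count_space A) < \<infinity>" "\<And>x. x \<in> A \<Longrightarrow> f x \<ge> 0"
  shows "f summable_on A"
proof -
  have "integrable (count_space A) f"
    using assms by (intro integrableI_nonneg) (auto simp: AE_count_space)
  then have "Infinite_Set_Sum.abs_summable_on f A" by (simp add: abs_summable_on_def)
  then have "Infinite_Sum.abs_summable_on f A" using abs_summable_equivalent by blast
  then show ?thesis using summable_on_iff_abs_summable_on_real by blast
qed


definition QM :: "nat \<Rightarrow> 'x pmf \<Rightarrow> (nat \<Rightarrow> 'x) pmf" where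
  "QM M p = Pi_pmf {..<M} undefined (\<lambda>_. p)"

lemma QM_support: "\<omega> \<in> set_pmf (QM M p) \<Longrightarrow> i < M \<Longrightarrow> \<omega> i \<in> set_pmf p"
  by (auto simp: QM_def set_Pi_pmf PiE_dflt_def)

lemma QM_component: "i < M \<Longrightarrow> map_pmf (\<lambda>\<omega>. \<omega> i) (QM M p) = p"
  by (simp add: QM_def Pi_pmf_component)

lemma QM_exp1:
  fixes f :: "'x \<Rightarrow> real"
  assumes "i < M"
  shows "measure_pmf.expectation (QM M p) (\<lambda>\<omega>. f (\<omega> i)) = measure_pmf.expectation p f"
proof -
  have "measure_pmf.expectation (map_pmf (\<lambda>\<omega>. \<omega> i) (QM M p)) f
      = measure_pmf.expectation (QM M p) (\<lambda>\<omega>. f (\<omega> i))" by simp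
  then show ?thesis using QM_component[OF assms, of p] by simp
qed

lemma QM_exp2:
  fixes f h :: "'x \<Rightarrow> real"
  assumes "i < M" "j < M" "i \<noteq> j"
    and "\<And>x. 0 \<le> f x" "\<And>x. f x \<le> B" "\<And>x. 0 \<le> h x" "\<And>x. h x \<le> B"
  shows "measure_pmf.expectation (QM M p) (\<lambda>\<omega>. f (\<omega> i) * h (\<omega> j))
       = measure_pmf.expectation p f * measure_pmf.expectation p h"
proof -
  define F where "F z = (if z = i then f else if z = j then h else (\<lambda>_. 1::real))" for z
  have bd: "\<bar>F z x\<bar> \<le> max B 1" for z x
    using assms(4-7)[of x] by (auto simp: F_def)
  have intf: "integrable (measure_pmf p) f"
    by (rule integrable_pmf_bdd[of _ B]) (use assms(4,5) in \<open>auto simp: abs_le_iff intro: order_trans[OF _ assms(4)]\<close>)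
  have inth: "integrable (measure_pmf p) h"
    by (rule integrable_pmf_bdd[of _ B]) (use assms(6,7) in \<open>auto simp: abs_le_iff intro: order_trans[OF _ assms(6)]\<close>)
  have pr: "(\<Prod>z\<in>{..<M}. F z (\<omega> z)) = f (\<omega> i) * h (\<omega> j)" for \<omega>
  proof -
    have "(\<Prod>z\<in>{..<M}. F z (\<omega> z)) = (\<Prod>z\<in>{i,j}. F z (\<omega> z))"
      by (rule prod.mono_neutral_right) (use assms in \<open>auto simp: F_def\<close>)
    then show ?thesis using assms by (simp add: F_def)
  qed
  have "measure_pmf.expectation (Pi_pmf {..<M} undefined (\<lambda>_. p)) (\<lambda>\<omega>. \<Prod>z\<in>{..<M}. F z (\<omega> z))
     = (\<Prod>z\<in>{..<M}. measure_pmf.expectation p (\<lambda>v. F z v))"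
    by (rule expectation_prod_Pi_pmf)
       (use assms intf inth in \<open>auto simp: F_def\<close>)
  also have "\<dots> = (\<Prod>z\<in>{i,j}. measure_pmf.expectation p (\<lambda>v. F z v))"
    by (rule prod.mono_neutral_right) (use assms in \<open>auto simp: F_def\<close>)
  also have "\<dots> = measure_pmf.expectation p f * measure_pmf.expectation p h"
    using assms by (simp add: F_def)
  finally show ?thesis by (simp add: pr QM_def)
qed

lemma QM_exists_le:
  fixes f :: "(nat \<Rightarrow> 'x) \<Rightarrow> real"
  assumes "integrable (measure_pmf Q) f" "measure_pmf.expectation Q f \<le> B"
  shows "\<exists>\<omega>\<in>set_pmf Q. f \<omega> \<le> B"
proof (rule ccontr)
  assume "\<not> ?thesis"
  then have gt: "\<And>\<omega>. \<omega> \<in> set_pmf Q \<Longrightarrow> B < f \<omega>" by force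
  have "measure_pmf.expectation Q (\<lambda>_. B) < measure_pmf.expectation Q f"
    by (rule measure_pmf.integral_less_AE_space)
       (use gt assms in \<open>auto simp: AE_measure_pmf_iff\<close>)
  then show False using assms(2) by simp
qed


lemma nn_count_finite_summable:
  fixes f :: "'a \<Rightarrow> real"
  assumes "(\<integral>\<^sup>+x. ennreal (f x) \<partial>count_space A) < \<infinity>" "\<And>x. x \<in> A \<Longrightarrow> f x \<ge> 0"
  shows "f summable_on A" "ennreal (infsum f A) = (\<integral>\<^sup>+x. ennreal (f x) \<partial>count_space A)"
proof -
  show s: "f summable_on A" by (rule infsum_nn_finite[OF assms])
  show "ennreal (infsum f A) = (\<integral>\<^sup>+x. ennreal (f x) \<partial>count_space A)"
    by (rule ennreal_infsum_nn[OF s assms(2)])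
qed

lemma nn_count_point_le:
  fixes g :: "'a \<Rightarrow> ennreal"
  shows "g y \<le> (\<integral>\<^sup>+x. g x \<partial>count_space UNIV)"
proof -
  have "(\<integral>\<^sup>+x. g x * indicator {y} x \<partial>count_space UNIV) \<le> (\<integral>\<^sup>+x. g x \<partial>count_space UNIV)"
    by (intro nn_integral_mono) (auto simp: indicator_def)
  moreover have "(\<integral>\<^sup>+x. g x * indicator {y} x \<partial>count_space UNIV) = g y"
    by (simp add: nn_integral_indicator_singleton')
  ultimately show ?thesis by simp
qed

lemma infsum_swap_nonneg:
  fixes f :: "'a::countable \<Rightarrow> 'b::countable \<Rightarrow> real"
  assumes nn: "\<And>x y. 0 \<le> f x y"
    and s1: "\<And>x. f x summable_on UNIV"
    and s2: "(\<lambda>x. \<Sum>\<^sub>\<infinity>y. f x y) summable_on UNIV"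
  shows "(\<lambda>y. \<Sum>\<^sub>\<infinity>x. f x y) summable_on UNIV"
    and "(\<Sum>\<^sub>\<infinity>x. \<Sum>\<^sub>\<infinity>y. f x y) = (\<Sum>\<^sub>\<infinity>y. \<Sum>\<^sub>\<infinity>x. f x y)"
    and "\<And>y. (\<lambda>x. f x y) summable_on UNIV"
proof -
  have e1: "ennreal (\<Sum>\<^sub>\<infinity>x. \<Sum>\<^sub>\<infinity>y. f x y) = (\<integral>\<^sup>+x. ennreal (\<Sum>\<^sub>\<infinity>y. f x y) \<partial>count_space UNIV)"
    by (rule ennreal_infsum_nn[OF s2]) (auto intro: infsum_nonneg nn)
  also have "\<dots> = (\<integral>\<^sup>+x. \<integral>\<^sup>+y. ennreal (f x y) \<partial>count_space UNIV \<partial>count_space UNIV)"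
    by (intro nn_integral_cong ennreal_infsum_nn s1) (auto intro: nn)
  also have "\<dots> = (\<integral>\<^sup>+y. \<integral>\<^sup>+x. ennreal (f x y) \<partial>count_space UNIV \<partial>count_space UNIV)"
    by (rule nn_integral_count_space_nn_integral) auto
  finally have e2: "ennreal (\<Sum>\<^sub>\<infinity>x. \<Sum>\<^sub>\<infinity>y. f x y) = (\<integral>\<^sup>+y. \<integral>\<^sup>+x. ennreal (f x y) \<partial>count_space UNIV \<partial>count_space UNIV)" .
  have fin: "(\<integral>\<^sup>+y. \<integral>\<^sup>+x. ennreal (f x y) \<partial>count_space UNIV \<partial>count_space UNIV) < \<infinity>"
    unfolding e2[symmetric] by simp
  have fin1: "(\<integral>\<^sup>+x. ennreal (f x y) \<partial>count_space UNIV) < \<infinity>" for y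
    using nn_count_point_le[of "\<lambda>y. \<integral>\<^sup>+x. ennreal (f x y) \<partial>count_space UNIV" y] fin by (rule le_less_trans)
  show s3: "(\<lambda>x. f x y) summable_on UNIV" for y
    by (rule nn_count_finite_summable(1)[OF fin1]) (auto intro: nn)
  have e3: "ennreal (\<Sum>\<^sub>\<infinity>x. f x y) = (\<integral>\<^sup>+x. ennreal (f x y) \<partial>count_space UNIV)" for y
    by (rule nn_count_finite_summable(2)[OF fin1]) (auto intro: nn)
  have fin2: "(\<integral>\<^sup>+y. ennreal (\<Sum>\<^sub>\<infinity>x. f x y) \<partial>count_space UNIV) < \<infinity>"
    using fin by (simp add: e3)
  show "(\<lambda>y. \<Sum>\<^sub>\<infinity>x. f x y) summable_on UNIV"
    by (rule nn_count_finite_summable(1)[OF fin2]) (auto intro: nn infsum_nonneg)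
  have "ennreal (\<Sum>\<^sub>\<infinity>y. \<Sum>\<^sub>\<infinity>x. f x y) = (\<integral>\<^sup>+y. ennreal (\<Sum>\<^sub>\<infinity>x. f x y) \<partial>count_space UNIV)"
    by (rule nn_count_finite_summable(2)[OF fin2]) (auto intro: nn infsum_nonneg)
  also have "\<dots> = ennreal (\<Sum>\<^sub>\<infinity>x. \<Sum>\<^sub>\<infinity>y. f x y)" using e2 by (simp add: e3)
  finally show "(\<Sum>\<^sub>\<infinity>x. \<Sum>\<^sub>\<infinity>y. f x y) = (\<Sum>\<^sub>\<infinity>y. \<Sum>\<^sub>\<infinity>x. f x y)"
    by (subst (asm) ennreal_inj) (auto intro!: infsum_nonneg nn)
qed

lemma infsum_sum_finite:
  fixes f :: "'i \<Rightarrow> 'a \<Rightarrow> real"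
  assumes "finite I" "\<And>i. i \<in> I \<Longrightarrow> f i summable_on A"
  shows "(\<lambda>x. \<Sum>i\<in>I. f i x) summable_on A \<and> (\<Sum>\<^sub>\<infinity>x\<in>A. \<Sum>i\<in>I. f i x) = (\<Sum>i\<in>I. \<Sum>\<^sub>\<infinity>x\<in>A. f i x)"
  using assms
proof (induction rule: finite_induct)
  case empty
  then show ?case by simp
next
  case (insert i I)
  then have h: "(\<lambda>x. \<Sum>i\<in>I. f i x) summable_on A"
    "(\<Sum>\<^sub>\<infinity>x\<in>A. \<Sum>i\<in>I. f i x) = (\<Sum>i\<in>I. \<Sum>\<^sub>\<infinity>x\<in>A. f i x)" by auto
  have fi: "f i summable_on A" using insert by auto
  show ?case using insert h fi
    by (auto simp: infsum_add intro!: summable_on_add)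
qed

lemma wam_gm:
  fixes X Y s :: real
  assumes "0 \<le> X" "0 \<le> Y" "0 \<le> s" "s \<le> 1"
  shows "X powr (1 - s) * Y powr s \<le> (1 - s) * X + s * Y"
proof (cases "X = 0 \<or> Y = 0")
  case True
  then show ?thesis using assms by (cases "s = 0"; cases "s = 1") auto
next
  case False
  then have XY: "X > 0" "Y > 0" using assms by auto
  have "exp ((1 - s) *\<^sub>R ln X + s *\<^sub>R ln Y) \<le> (1 - s) * exp (ln X) + s * exp (ln Y)"
    by (rule convex_onD[OF exp_convex]) (use assms in auto)
  moreover have "exp ((1 - s) *\<^sub>R ln X + s *\<^sub>R ln Y) = X powr (1 - s) * Y powr s"
    using XY by (simp add: powr_def exp_add)
  ultimately show ?thesis using XY by simp
qed

lemma ln_tangent: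
  fixes z a :: real
  assumes "0 < z" "0 < a"
  shows "ln z \<le> ln a + z / a - 1"
proof -
  have "ln (z / a) \<le> z / a - 1" by (rule ln_le_minus_one) (use assms in simp)
  then show ?thesis using assms by (simp add: ln_div)
qed

lemma powr_subadd:
  fixes u s :: real
  assumes "0 \<le> u" "0 \<le> s" "s \<le> 1"
  shows "(1 + u) powr s \<le> 1 + u powr s"
proof -
  define v where "v = 1 + u"
  have v: "v \<ge> 1" using assms by (simp add: v_def)
  have a: "(1 / v) \<le> (1 / v) powr s"
    using powr_mono'[of s 1 "1/v"] assms v by simp
  have b: "(u / v) \<le> (u / v) powr s"
    using powr_mono'[of s 1 "u/v"] assms v by (simp add: v_def)
  have "1 = 1 / v + u / v" using v by (simp add: v_def field_simps)
  also have "\<dots> \<le> (1/v) powr s + (u/v) powr s" using a b by simp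
  also have "\<dots> = (1 + u powr s) / v powr s"
    using v assms by (simp add: powr_divide add_divide_distrib)
  finally have "v powr s \<le> 1 + u powr s" using v by (simp add: field_simps)
  then show ?thesis by (simp add: v_def)
qed


lemma infsum_pmf_1: "(\<Sum>\<^sub>\<infinity>y. pmf q y) = 1"
proof -
  have "ennreal (\<Sum>\<^sub>\<infinity>y. pmf q y) = (\<integral>\<^sup>+y. ennreal (pmf q y) \<partial>count_space UNIV)"
    by (rule ennreal_infsum_nn[OF pmf_summable_on]) auto
  also have "\<dots> = 1" by (simp add: nn_integral_pmf)
  finally show ?thesis by (simp add: ennreal_eq_1)
qed

locale chan =
  fixes W :: "'x::countable \<Rightarrow> 'y::countable pmf" and p :: "'x pmf" and M :: nat
  assumes M_pos: "M > 0"
begin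

abbreviation "w x y \<equiv> pmf (W x) y"
abbreviation "P y \<equiv> Wp p W y"
definition qq :: "(nat \<Rightarrow> 'x) \<Rightarrow> 'y \<Rightarrow> real" where
  "qq \<omega> y = (\<Sum>i<M. w (\<omega> i) y) / real M"
abbreviation "Q \<equiv> QM M p"

lemma w_bd: "\<bar>w x y\<bar> \<le> 1" by (simp add: pmf_le_1)

lemma pw_summable: "(\<lambda>x. pmf p x * w x y) summable_on A"
  by (rule pmf_bdd_summable_on[of _ 1]) (rule w_bd)

lemma P_exp: "P y = measure_pmf.expectation p (\<lambda>x. w x y)"
  by (simp add: Wp_def expectation_infsum[of _ 1, OF w_bd])

lemma P_nonneg: "0 \<le> P y"
  by (simp add: Wp_def infsum_nonneg)

lemma P_le1: "P y \<le> 1"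
proof -
  have "measure_pmf.expectation p (\<lambda>x. w x y) \<le> measure_pmf.expectation p (\<lambda>x. 1)"
    by (intro integral_mono integrable_pmf_bdd[of _ 1]) (auto simp: pmf_le_1)
  then show ?thesis by (simp add: P_exp)
qed

lemma P_ge: "pmf p x * w x y \<le> P y"
proof -
  have "sum (\<lambda>x. pmf p x * w x y) {x} \<le> (\<Sum>\<^sub>\<infinity>x. pmf p x * w x y)"
    by (rule finite_sum_le_infsum[OF pw_summable]) auto
  then show ?thesis by (simp add: Wp_def)
qed

lemma P_pos: "x \<in> set_pmf p \<Longrightarrow> w x y > 0 \<Longrightarrow> P y > 0"
  using P_ge[of x y] by (smt (verit) mult_pos_pos pmf_positive)

lemma pw_zero: "P y = 0 \<Longrightarrow> pmf p x * w x y = 0"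
  using P_ge[of x y] by (smt (verit) mult_nonneg_nonneg pmf_nonneg)

lemma w_zero: "P y = 0 \<Longrightarrow> x \<in> set_pmf p \<Longrightarrow> w x y = 0"
  using P_pos[of x y] by (smt (verit) pmf_nonneg)

lemma sumP: "(\<lambda>y. P y) summable_on UNIV" "(\<Sum>\<^sub>\<infinity>y. P y) = 1"
proof -
  have s1: "(\<lambda>y. pmf p x * w x y) summable_on UNIV" for x
    by (intro summable_on_cmult_right pmf_summable_on)
  have e: "(\<Sum>\<^sub>\<infinity>y. pmf p x * w x y) = pmf p x" for x
    by (simp add: infsum_cmult_right' infsum_pmf_1)
  have s2: "(\<lambda>x. \<Sum>\<^sub>\<infinity>y. pmf p x * w x y) summable_on UNIV"
    by (simp add: e pmf_summable_on)
  note sw = infsum_swap_nonneg[of "\<lambda>x y. pmf p x * w x y", OF _ s1 s2]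
  show "(\<lambda>y. P y) summable_on UNIV" using sw(1) by (simp add: Wp_def)
  have "(\<Sum>\<^sub>\<infinity>y. P y) = (\<Sum>\<^sub>\<infinity>x. \<Sum>\<^sub>\<infinity>y. pmf p x * w x y)"
    using sw(2) by (simp add: Wp_def)
  also have "\<dots> = 1" by (simp add: e infsum_pmf_1)
  finally show "(\<Sum>\<^sub>\<infinity>y. P y) = 1" .
qed

lemma qq_nonneg: "0 \<le> qq \<omega> y"
  by (simp add: qq_def sum_nonneg)

lemma qq_le1: "qq \<omega> y \<le> 1"
proof -
  have "(\<Sum>i<M. w (\<omega> i) y) \<le> (\<Sum>i<M. 1)" by (intro sum_mono) (simp add: pmf_le_1)
  then show ?thesis using M_pos by (simp add: qq_def divide_le_eq)
qed

lemma qq_summable: "qq \<omega> summable_on UNIV"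
proof -
  have "(\<lambda>y. \<Sum>i<M. w (\<omega> i) y) summable_on UNIV"
    using infsum_sum_finite[of "{..<M}" "\<lambda>i y. w (\<omega> i) y" UNIV] by (simp add: pmf_summable_on)
  then show ?thesis unfolding qq_def divide_inverse by (rule summable_on_cmult_left)
qed

lemma qq_zero: "qq \<omega> y = 0 \<Longrightarrow> i < M \<Longrightarrow> w (\<omega> i) y = 0"
  unfolding qq_def using M_pos
  by (auto simp: sum_nonneg_eq_0_iff)

lemma qq_support: "\<omega> \<in> set_pmf Q \<Longrightarrow> qq \<omega> y > 0 \<Longrightarrow> P y > 0"
proof (rule ccontr)
  assume a: "\<omega> \<in> set_pmf Q" "qq \<omega> y > 0" "\<not> P y > 0"
  then have "P y = 0" using P_nonneg[of y] by simp
  then have "w (\<omega> i) y = 0" if "i < M" for i using w_zero QM_support[OF a(1) that] by blast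
  then have "qq \<omega> y = 0" by (simp add: qq_def)
  then show False using a by simp
qed

lemma code_out_qq: "code_out W (map \<omega> [0..<M]) = qq \<omega>"
  by (auto simp: code_out_def qq_def fun_eq_iff intro!: sum.cong)

end


context chan
begin

lemma var_bound:
  fixes f :: "'x \<Rightarrow> real"
  assumes f0: "\<And>x. 0 \<le> f x" and fB: "\<And>x. f x \<le> B"
  shows "measure_pmf.expectation Q (\<lambda>\<omega>. ((\<Sum>i<M. f (\<omega> i)) / M - measure_pmf.expectation p f)\<^sup>2)
         \<le> measure_pmf.expectation p (\<lambda>x. (f x)\<^sup>2) / M"
proof -
  define m where "m = measure_pmf.expectation p f"
  define v where "v = measure_pmf.expectation p (\<lambda>x. (f x)\<^sup>2)"
  have B0: "0 \<le> B" using f0 fB order_trans by blast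
  have fb: "\<bar>f x\<bar> \<le> B" for x using f0 fB by auto
  have intf: "integrable (measure_pmf p) f" by (rule integrable_pmf_bdd[OF fb])
  have ints: "integrable (measure_pmf Q) (\<lambda>\<omega>. c * f (\<omega> i) + d * f (\<omega> j) + e * (f (\<omega> i) * f (\<omega> j)))" for c d e i j
  proof (rule integrable_pmf_bdd)
    show "\<bar>c * f (\<omega> i) + d * f (\<omega> j) + e * (f (\<omega> i) * f (\<omega> j))\<bar> \<le> \<bar>c\<bar> * B + \<bar>d\<bar> * B + \<bar>e\<bar> * (B * B)" for \<omega>
    proof -
      have "\<bar>c * f (\<omega> i)\<bar> \<le> \<bar>c\<bar> * B" using fb by (simp add: abs_mult mult_left_mono)
      moreover have "\<bar>d * f (\<omega> j)\<bar> \<le> \<bar>d\<bar> * B" using fb by (simp add: abs_mult mult_left_mono)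
      moreover have "\<bar>e * (f (\<omega> i) * f (\<omega> j))\<bar> \<le> \<bar>e\<bar> * (B * B)"
        using fb[of "\<omega> i"] fb[of "\<omega> j"] B0
        by (simp add: abs_mult mult_left_mono mult_mono)
      ultimately show ?thesis by linarith
    qed
  qed
  have Ei: "measure_pmf.expectation Q (\<lambda>\<omega>. f (\<omega> i)) = m" if "i < M" for i
    using QM_exp1[OF that] by (simp add: m_def)
  have Eii: "measure_pmf.expectation Q (\<lambda>\<omega>. f (\<omega> i) * f (\<omega> i)) = v" if "i < M" for i
    using QM_exp1[OF that, where f="\<lambda>x. f x * f x" and p=p] by (simp add: v_def power2_eq_square)
  have Eij: "measure_pmf.expectation Q (\<lambda>\<omega>. f (\<omega> i) * f (\<omega> j)) = m * m" if "i < M" "j < M" "i \<noteq> j" for i j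
    using QM_exp2[OF that f0 fB f0 fB] by (simp add: m_def)
  have int1: "integrable (measure_pmf Q) (\<lambda>\<omega>. f (\<omega> i))" for i
    by (rule integrable_pmf_bdd[of _ B]) (use fb in auto)
  have int2: "integrable (measure_pmf Q) (\<lambda>\<omega>. f (\<omega> i) * f (\<omega> j))" for i j
    by (rule integrable_pmf_bdd[of _ "B * B"]) (use fb B0 in \<open>auto simp: abs_mult intro: mult_mono\<close>)
  have lin: "measure_pmf.expectation Q (\<lambda>\<omega>. f (\<omega> i) * f (\<omega> j) - m * f (\<omega> i) - m * f (\<omega> j) + m * m)
     = measure_pmf.expectation Q (\<lambda>\<omega>. f (\<omega> i) * f (\<omega> j)) - m * measure_pmf.expectation Q (\<lambda>\<omega>. f (\<omega> i))
       - m * measure_pmf.expectation Q (\<lambda>\<omega>. f (\<omega> j)) + m * m" for i j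
    by (subst Bochner_Integration.integral_add Bochner_Integration.integral_diff;
        (auto intro!: Bochner_Integration.integrable_diff int1 int2)?)+
  have intij: "integrable (measure_pmf Q) (\<lambda>\<omega>. (f (\<omega> i) - m) * (f (\<omega> j) - m))" for i j
    unfolding left_diff_distrib right_diff_distrib
    by (auto intro!: Bochner_Integration.integrable_diff int1 int2)
  have cij: "measure_pmf.expectation Q (\<lambda>\<omega>. (f (\<omega> i) - m) * (f (\<omega> j) - m))
      = (if i = j then v - m * m else 0)" if "i < M" "j < M" for i j
  proof -
    have eq: "(\<lambda>\<omega>. (f (\<omega> i) - m) * (f (\<omega> j) - m))
        = (\<lambda>\<omega>. f (\<omega> i) * f (\<omega> j) - m * f (\<omega> i) - m * f (\<omega> j) + m * m)"
      by (auto simp: algebra_simps)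
    show ?thesis unfolding eq lin using that Ei Eii Eij by (cases "i = j") auto
  qed
  have pw: "((\<Sum>i<M. f (\<omega> i)) / M - m)\<^sup>2 = (\<Sum>i<M. \<Sum>j<M. (f (\<omega> i) - m) * (f (\<omega> j) - m)) / (M * M)" for \<omega>
  proof -
    have "(\<Sum>i<M. f (\<omega> i)) / M - m = (\<Sum>i<M. (f (\<omega> i) - m)) / M"
      using M_pos by (simp add: sum_subtractf field_simps)
    then show ?thesis
      by (simp add: power2_eq_square sum_product)
  qed
  have "measure_pmf.expectation Q (\<lambda>\<omega>. ((\<Sum>i<M. f (\<omega> i)) / M - m)\<^sup>2)
      = (\<Sum>i<M. \<Sum>j<M. measure_pmf.expectation Q (\<lambda>\<omega>. (f (\<omega> i) - m) * (f (\<omega> j) - m))) / (M * M)"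
    unfolding pw using intij by (simp add: integral_sum)
  also have "\<dots> = (\<Sum>i<M. \<Sum>j<M. (if i = j then v - m * m else 0)) / (M * M)"
    by (intro arg_cong[where f="\<lambda>t. t / _"] sum.cong refl) (simp add: cij)
  also have "\<dots> = (M * (v - m * m)) / (M * M)"
    by simp
  also have "\<dots> = (v - m * m) / M" using M_pos by simp
  also have "\<dots> \<le> v / M" using M_pos by (simp add: divide_right_mono)
  finally show ?thesis by (simp add: m_def v_def)
qed

end

context chan
begin

lemma swap_pw:
  fixes h :: "'x \<Rightarrow> 'y \<Rightarrow> real"
  assumes h0: "\<And>x y. 0 \<le> h x y" and hK: "\<And>x y. h x y \<le> K * w x y" and K0: "0 \<le> K"
  shows "(\<lambda>y. \<Sum>\<^sub>\<infinity>x. pmf p x * h x y) summable_on UNIV"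
    and "(\<Sum>\<^sub>\<infinity>x. pmf p x * (\<Sum>\<^sub>\<infinity>y. h x y)) = (\<Sum>\<^sub>\<infinity>y. \<Sum>\<^sub>\<infinity>x. pmf p x * h x y)"
    and "\<And>y. (\<lambda>x. pmf p x * h x y) summable_on UNIV"
proof -
  have hs: "(\<lambda>y. h x y) summable_on UNIV" for x
  proof (rule summable_on_comparison_test)
    show "(\<lambda>y. K * w x y) summable_on UNIV" by (intro summable_on_cmult_right pmf_summable_on)
  qed (use h0 hK in auto)
  have s1: "(\<lambda>y. pmf p x * h x y) summable_on UNIV" for x
    by (intro summable_on_cmult_right hs)
  have le: "(\<Sum>\<^sub>\<infinity>y. h x y) \<le> K" for x
  proof -
    have "(\<Sum>\<^sub>\<infinity>y. h x y) \<le> (\<Sum>\<^sub>\<infinity>y. K * w x y)"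
      by (intro infsum_mono hs summable_on_cmult_right pmf_summable_on hK)
    also have "\<dots> = K" by (simp add: infsum_cmult_right' infsum_pmf_1)
    finally show ?thesis .
  qed
  have eq: "(\<Sum>\<^sub>\<infinity>y. pmf p x * h x y) = pmf p x * (\<Sum>\<^sub>\<infinity>y. h x y)" for x
    by (simp add: infsum_cmult_right')
  have s2: "(\<lambda>x. \<Sum>\<^sub>\<infinity>y. pmf p x * h x y) summable_on UNIV"
  proof (rule summable_on_comparison_test)
    show "(\<lambda>x. K * pmf p x) summable_on UNIV" by (intro summable_on_cmult_right pmf_summable_on)
    show "(\<Sum>\<^sub>\<infinity>y. pmf p x * h x y) \<le> K * pmf p x" for x
      unfolding eq using mult_left_mono[OF le[of x] pmf_nonneg[of p x]] by (simp add: mult.commute)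
    show "0 \<le> (\<Sum>\<^sub>\<infinity>y. pmf p x * h x y)" for x by (intro infsum_nonneg) (simp add: h0)
  qed
  note sw = infsum_swap_nonneg[of "\<lambda>x y. pmf p x * h x y", OF _ s1 s2]
  show "(\<lambda>y. \<Sum>\<^sub>\<infinity>x. pmf p x * h x y) summable_on UNIV" using sw(1) h0 by simp
  show "(\<Sum>\<^sub>\<infinity>x. pmf p x * (\<Sum>\<^sub>\<infinity>y. h x y)) = (\<Sum>\<^sub>\<infinity>y. \<Sum>\<^sub>\<infinity>x. pmf p x * h x y)"
    using sw(2) h0 by (simp add: eq)
  show "(\<lambda>x. pmf p x * h x y) summable_on UNIV" for y using sw(3) h0 by simp
qed

definition bb :: "real \<Rightarrow> 'x \<Rightarrow> 'y \<Rightarrow> real" where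
  "bb C x y = (if C * P y < w x y then w x y else 0)"
definition gg :: "real \<Rightarrow> 'x \<Rightarrow> 'y \<Rightarrow> real" where
  "gg C x y = (if w x y \<le> C * P y then w x y else 0)"
definition dd :: "real \<Rightarrow> 'x \<Rightarrow> 'y \<Rightarrow> real" where
  "dd C x y = (if w x y \<le> C * P y \<and> P y > 0 then (w x y)\<^sup>2 / P y else 0)"

lemma w_split: "w x y = gg C x y + bb C x y"
  by (auto simp: gg_def bb_def)

lemma bb_nonneg: "0 \<le> bb C x y" and bb_le: "bb C x y \<le> w x y"
  by (auto simp: bb_def)
lemma gg_nonneg: "0 \<le> gg C x y" and gg_le: "gg C x y \<le> w x y"
  by (auto simp: gg_def)

lemma dd_nonneg: "0 \<le> dd C x y"
  by (auto simp: dd_def)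

lemma dd_le: "0 \<le> C \<Longrightarrow> dd C x y \<le> C * w x y"
proof -
  assume C: "0 \<le> C"
  show ?thesis
  proof (cases "w x y \<le> C * P y \<and> P y > 0")
    case True
    then have "w x y * w x y \<le> (C * P y) * w x y" by (intro mult_right_mono) auto
    then have "(w x y)\<^sup>2 / P y \<le> C * w x y"
      using True by (simp add: power2_eq_square divide_le_eq mult_ac)
    then show ?thesis using True by (simp add: dd_def)
  next
    case False
    then show ?thesis using C by (auto simp: dd_def)
  qed
qed

lemma delta_eq:
  shows "delta p W C = (\<Sum>\<^sub>\<infinity>y. \<Sum>\<^sub>\<infinity>x. pmf p x * bb C x y)"
    and "(\<lambda>y. \<Sum>\<^sub>\<infinity>x. pmf p x * bb C x y) summable_on UNIV"
proof -
  have inner: "(\<Sum>\<^sub>\<infinity>y\<in>{y. w x y > C * P y}. w x y) = (\<Sum>\<^sub>\<infinity>y. bb C x y)" for x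
    by (rule infsum_cong_neutral) (auto simp: bb_def)
  note sw = swap_pw[of "bb C" 1, OF bb_nonneg] bb_le
  show "delta p W C = (\<Sum>\<^sub>\<infinity>y. \<Sum>\<^sub>\<infinity>x. pmf p x * bb C x y)"
    unfolding delta_def inner using sw by simp
  show "(\<lambda>y. \<Sum>\<^sub>\<infinity>x. pmf p x * bb C x y) summable_on UNIV" using sw by simp
qed

lemma delta'_eq:
  assumes "0 \<le> C"
  shows "delta' p W C = (\<Sum>\<^sub>\<infinity>y. \<Sum>\<^sub>\<infinity>x. pmf p x * dd C x y)"
    and "(\<lambda>y. \<Sum>\<^sub>\<infinity>x. pmf p x * dd C x y) summable_on UNIV"
proof -
  have inner: "(\<Sum>\<^sub>\<infinity>y\<in>{y. w x y \<le> C * P y \<and> P y > 0}. (w x y)\<^sup>2 / P y) = (\<Sum>\<^sub>\<infinity>y. dd C x y)" for x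
    by (rule infsum_cong_neutral) (auto simp: dd_def)
  note sw = swap_pw[of "dd C" C, OF dd_nonneg dd_le[OF assms] assms]
  show "delta' p W C = (\<Sum>\<^sub>\<infinity>y. \<Sum>\<^sub>\<infinity>x. pmf p x * dd C x y)"
    unfolding delta'_def inner using sw by simp
  show "(\<lambda>y. \<Sum>\<^sub>\<infinity>x. pmf p x * dd C x y) summable_on UNIV" using sw by simp
qed

lemma delta'_le: "0 \<le> C \<Longrightarrow> delta' p W C \<le> C"
proof -
  assume C: "0 \<le> C"
  have "delta' p W C = (\<Sum>\<^sub>\<infinity>x. pmf p x * (\<Sum>\<^sub>\<infinity>y. dd C x y))"
    using delta'_eq[OF C] swap_pw[of "dd C" C, OF dd_nonneg dd_le[OF C] C] by simp
  also have "\<dots> \<le> (\<Sum>\<^sub>\<infinity>x. pmf p x * C)"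
  proof -
    have inb: "(\<Sum>\<^sub>\<infinity>y. dd C x y) \<le> C" for x
    proof -
      have "(\<Sum>\<^sub>\<infinity>y. dd C x y) \<le> (\<Sum>\<^sub>\<infinity>y. C * w x y)"
        by (intro infsum_mono summable_on_cmult_right pmf_summable_on dd_le C)
           (rule summable_on_comparison_test[of "\<lambda>y. C * w x y"], auto intro: summable_on_cmult_right pmf_summable_on dd_le C dd_nonneg)
      also have "\<dots> = C" by (simp add: infsum_cmult_right' infsum_pmf_1)
      finally show ?thesis .
    qed
    have le2: "pmf p x * (\<Sum>\<^sub>\<infinity>y. dd C x y) \<le> pmf p x * C" for x
      by (rule mult_left_mono[OF inb]) simp
    have nn2: "0 \<le> pmf p x * (\<Sum>\<^sub>\<infinity>y. dd C x y)" for x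
      by (simp add: infsum_nonneg dd_nonneg)
    have sC: "(\<lambda>x. pmf p x * C) summable_on UNIV" by (intro summable_on_cmult_left pmf_summable_on)
    show ?thesis
      by (rule infsum_mono[OF summable_on_comparison_test[OF sC] sC]) (use le2 nn2 in auto)
  qed
  also have "\<dots> = C" by (simp add: infsum_cmult_left' infsum_pmf_1)
  finally show ?thesis .
qed

end

lemma amgm_abs:
  fixes z c P :: real
  assumes "0 < c" "0 < P"
  shows "\<bar>z\<bar> \<le> (c * z\<^sup>2 / P + P / c) / 2"
proof -
  have "0 \<le> (c * \<bar>z\<bar> - P)\<^sup>2" by simp
  then have "2 * c * P * \<bar>z\<bar> \<le> c * c * z\<^sup>2 + P * P"
    by (simp add: power2_eq_square algebra_simps abs_mult_self_eq)
  then have "2 * c * P * \<bar>z\<bar> / (c * P) \<le> (c * c * z\<^sup>2 + P * P) / (c * P)"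
    using assms by (intro divide_right_mono) auto
  then show ?thesis using assms by (simp add: field_simps power2_eq_square)
qed

lemma half_abs_helper:
  fixes A B K :: real
  shows "A \<le> K \<Longrightarrow> 0 \<le> A \<Longrightarrow> 0 \<le> B \<Longrightarrow> \<bar>(A + B) / 2\<bar> \<le> (K + B) / 2"
  by auto

context chan
begin

lemma per_y:
  assumes C: "0 \<le> C" and c: "0 < c"
  shows "measure_pmf.expectation Q (\<lambda>\<omega>. \<bar>qq \<omega> y - P y\<bar>)
     \<le> 2 * (\<Sum>\<^sub>\<infinity>x. pmf p x * bb C x y) + (c * (\<Sum>\<^sub>\<infinity>x. pmf p x * dd C x y) / M + P y / c) / 2"
proof -
  define G where "G x = gg C x y" for x
  define B where "B x = bb C x y" for x
  define mG where "mG = measure_pmf.expectation p G"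
  define mB where "mB = measure_pmf.expectation p B"
  define qG where "qG \<omega> = (\<Sum>i<M. G (\<omega> i)) / M" for \<omega>
  define qB where "qB \<omega> = (\<Sum>i<M. B (\<omega> i)) / M" for \<omega>
  have G01: "0 \<le> G x" "G x \<le> 1" for x
    using gg_nonneg[of C x y] gg_le[of C x y] pmf_le_1[of "W x" y] by (auto simp: G_def)
  have B01: "0 \<le> B x" "B x \<le> 1" for x
    using bb_nonneg[of C x y] bb_le[of C x y] pmf_le_1[of "W x" y] by (auto simp: B_def)
  have intG: "integrable (measure_pmf p) G" by (rule integrable_pmf_bdd[of _ 1]) (use G01 in auto)
  have intB: "integrable (measure_pmf p) B" by (rule integrable_pmf_bdd[of _ 1]) (use B01 in auto)
  have Psplit: "P y = mG + mB"
  proof -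
    have "P y = measure_pmf.expectation p (\<lambda>x. G x + B x)"
      unfolding P_exp G_def B_def using w_split[of _ y C] by simp
    also have "\<dots> = mG + mB" using intG intB by (simp add: mG_def mB_def)
    finally show ?thesis .
  qed
  have mB_eq: "mB = (\<Sum>\<^sub>\<infinity>x. pmf p x * bb C x y)"
    unfolding mB_def by (subst expectation_infsum[of _ 1]) (use B01 in \<open>auto simp: B_def\<close>)
  have qsplit: "qq \<omega> y = qG \<omega> + qB \<omega>" for \<omega>
    unfolding qq_def qG_def qB_def G_def B_def
    by (simp add: w_split[of _ y C] sum.distrib add_divide_distrib)
  have qG01: "0 \<le> qG \<omega>" "qG \<omega> \<le> 1" for \<omega>
  proof -
    show "0 \<le> qG \<omega>" unfolding qG_def by (intro divide_nonneg_nonneg sum_nonneg) (auto simp: G01)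
    have "(\<Sum>i<M. G (\<omega> i)) \<le> (\<Sum>i<M. 1)" by (intro sum_mono) (simp add: G01)
    then show "qG \<omega> \<le> 1" using M_pos by (simp add: qG_def divide_le_eq)
  qed
  have qB01: "0 \<le> qB \<omega>" "qB \<omega> \<le> 1" for \<omega>
  proof -
    show "0 \<le> qB \<omega>" unfolding qB_def by (intro divide_nonneg_nonneg sum_nonneg) (auto simp: B01)
    have "(\<Sum>i<M. B (\<omega> i)) \<le> (\<Sum>i<M. 1)" by (intro sum_mono) (simp add: B01)
    then show "qB \<omega> \<le> 1" using M_pos by (simp add: qB_def divide_le_eq)
  qed
  have mG01: "0 \<le> mG" "mG \<le> 1"
  proof -
    show "0 \<le> mG" unfolding mG_def by (intro integral_nonneg_AE) (simp add: G01)
    have "mG \<le> measure_pmf.expectation p (\<lambda>_. 1)" unfolding mG_def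
      by (intro integral_mono intG) (auto simp: G01)
    then show "mG \<le> 1" by simp
  qed
  have mB0: "0 \<le> mB" unfolding mB_def by (intro integral_nonneg_AE) (simp add: B01)
  have int_z: "integrable (measure_pmf Q) (\<lambda>\<omega>. \<bar>qG \<omega> - mG\<bar>)"
  proof (rule integrable_pmf_bdd[of _ 2])
    fix \<omega> show "\<bar>\<bar>qG \<omega> - mG\<bar>\<bar> \<le> 2" using qG01[of \<omega>] mG01 by (simp add: abs_le_iff)
  qed
  have int_qB: "integrable (measure_pmf Q) qB"
    by (rule integrable_pmf_bdd[of _ 1]) (use qB01 in auto)
  have int_lhs: "integrable (measure_pmf Q) (\<lambda>\<omega>. \<bar>qq \<omega> y - P y\<bar>)"
  proof (rule integrable_pmf_bdd[of _ 2])
    fix \<omega> show "\<bar>\<bar>qq \<omega> y - P y\<bar>\<bar> \<le> 2"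
      using qq_nonneg[of \<omega> y] qq_le1[of \<omega> y] P_nonneg[of y] P_le1[of y] by (simp add: abs_le_iff)
  qed
  have EqB: "measure_pmf.expectation Q qB = mB"
  proof -
    have "measure_pmf.expectation Q qB = (\<Sum>i<M. measure_pmf.expectation Q (\<lambda>\<omega>. B (\<omega> i))) / M"
    proof -
      have iB: "integrable (measure_pmf Q) (\<lambda>\<omega>. B (\<omega> i))" for i
        by (rule integrable_pmf_bdd[of _ 1]) (simp add: B01 abs_le_iff)
      show ?thesis unfolding qB_def using iB by (simp add: integral_sum)
    qed
    also have "\<dots> = (\<Sum>i<M. mB) / M"
      by (intro arg_cong[where f="\<lambda>t. t / _"] sum.cong refl) (simp add: QM_exp1 mB_def)
    also have "\<dots> = mB" using M_pos by simp
    finally show ?thesis .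
  qed
  have Ez: "measure_pmf.expectation Q (\<lambda>\<omega>. \<bar>qG \<omega> - mG\<bar>)
       \<le> (c * (\<Sum>\<^sub>\<infinity>x. pmf p x * dd C x y) / M + P y / c) / 2"
  proof (cases "P y > 0")
    case Ppos: True
    have eqd: "measure_pmf.expectation p (\<lambda>x. (G x)\<^sup>2) / P y = (\<Sum>\<^sub>\<infinity>x. pmf p x * dd C x y)"
    proof -
      have "measure_pmf.expectation p (\<lambda>x. (G x)\<^sup>2) = (\<Sum>\<^sub>\<infinity>x. pmf p x * (G x)\<^sup>2)"
        by (rule expectation_infsum[of _ 1]) (use G01 in \<open>auto simp: abs_le_iff power_le_one\<close>)
      also have "\<dots> / P y = (\<Sum>\<^sub>\<infinity>x. pmf p x * (G x)\<^sup>2 * inverse (P y))"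
        by (simp add: infsum_cmult_left' divide_inverse)
      also have "\<dots> = (\<Sum>\<^sub>\<infinity>x. pmf p x * dd C x y)"
        using Ppos by (intro infsum_cong) (auto simp: G_def gg_def dd_def divide_inverse)
      finally show ?thesis .
    qed
    have sq4: "(qG \<omega> - mG)\<^sup>2 \<le> 4" for \<omega>
    proof -
      have "\<bar>qG \<omega> - mG\<bar> \<le> 1" using qG01[of \<omega>] mG01 by (simp add: abs_le_iff)
      then have "(qG \<omega> - mG)\<^sup>2 \<le> 1" by (simp add: abs_square_le_1)
      then show ?thesis by simp
    qed
    have vb: "measure_pmf.expectation Q (\<lambda>\<omega>. (qG \<omega> - mG)\<^sup>2) \<le> measure_pmf.expectation p (\<lambda>x. (G x)\<^sup>2) / M"
      unfolding qG_def mG_def by (rule var_bound[of G 1]) (auto simp: G01)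
    have int_sq: "integrable (measure_pmf Q) (\<lambda>\<omega>. (c * (qG \<omega> - mG)\<^sup>2 / P y + P y / c) / 2)"
    proof (rule integrable_pmf_bdd[of _ "(c * 4 / P y + P y / c) / 2"])
      fix \<omega>
      have "(qG \<omega> - mG)\<^sup>2 \<le> 4" by (rule sq4)
      then have "c * (qG \<omega> - mG)\<^sup>2 / P y \<le> c * 4 / P y"
        using c Ppos by (intro divide_right_mono mult_left_mono) auto
      moreover have "0 \<le> c * (qG \<omega> - mG)\<^sup>2 / P y" using c Ppos by simp
      moreover have "0 \<le> P y / c" using c Ppos by simp
      ultimately show "\<bar>(c * (qG \<omega> - mG)\<^sup>2 / P y + P y / c) / 2\<bar> \<le> (c * 4 / P y + P y / c) / 2"
        by (rule half_abs_helper)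
    qed
    have "measure_pmf.expectation Q (\<lambda>\<omega>. \<bar>qG \<omega> - mG\<bar>)
        \<le> measure_pmf.expectation Q (\<lambda>\<omega>. (c * (qG \<omega> - mG)\<^sup>2 / P y + P y / c) / 2)"
      by (intro integral_mono int_z int_sq amgm_abs c Ppos)
    also have "\<dots> = (c * measure_pmf.expectation Q (\<lambda>\<omega>. (qG \<omega> - mG)\<^sup>2) / P y + P y / c) / 2"
    proof -
      have int_v: "integrable (measure_pmf Q) (\<lambda>\<omega>. (qG \<omega> - mG)\<^sup>2)"
        by (rule integrable_pmf_bdd[of _ 4]) (simp add: sq4)
      show ?thesis using int_v by simp
    qed
    also have "\<dots> \<le> (c * (measure_pmf.expectation p (\<lambda>x. (G x)\<^sup>2) / M) / P y + P y / c) / 2"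
      using vb c Ppos by (intro divide_right_mono add_right_mono mult_left_mono) auto
    also have "\<dots> = (c * (\<Sum>\<^sub>\<infinity>x. pmf p x * dd C x y) / M + P y / c) / 2"
      unfolding eqd[symmetric] using M_pos Ppos by (simp add: field_simps)
    finally show ?thesis .
  next
    case False
    then have P0: "P y = 0" using P_nonneg[of y] by simp
    have G0: "G x = 0" for x using P0 pmf_nonneg[of "W x" y] by (auto simp: G_def gg_def)
    then have "G = (\<lambda>_. 0)" by auto
    then have "mG = 0" by (simp add: mG_def)
    moreover have "qG \<omega> = 0" for \<omega> by (simp add: qG_def G0)
    moreover have "0 \<le> (\<Sum>\<^sub>\<infinity>x. pmf p x * dd C x y)" by (intro infsum_nonneg) (simp add: dd_nonneg)
    ultimately show ?thesis using c M_pos P0 by simp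
  qed
  have pw: "\<bar>qq \<omega> y - P y\<bar> \<le> \<bar>qG \<omega> - mG\<bar> + qB \<omega> + mB" for \<omega>
    using qsplit[of \<omega>] Psplit qB01[of \<omega>] mB0 by (simp add: abs_le_iff) linarith
  have "measure_pmf.expectation Q (\<lambda>\<omega>. \<bar>qq \<omega> y - P y\<bar>)
      \<le> measure_pmf.expectation Q (\<lambda>\<omega>. \<bar>qG \<omega> - mG\<bar> + qB \<omega> + mB)"
    by (intro integral_mono int_lhs pw) (use int_z int_qB in auto)
  also have "\<dots> = measure_pmf.expectation Q (\<lambda>\<omega>. \<bar>qG \<omega> - mG\<bar>) + mB + mB"
    using int_z int_qB EqB by simp
  finally have fin: "measure_pmf.expectation Q (\<lambda>\<omega>. \<bar>qq \<omega> y - P y\<bar>)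
      \<le> measure_pmf.expectation Q (\<lambda>\<omega>. \<bar>qG \<omega> - mG\<bar>) + mB + mB" .
  define R where "R = (c * (\<Sum>\<^sub>\<infinity>x. pmf p x * dd C x y) / M + P y / c) / 2"
  have "measure_pmf.expectation Q (\<lambda>\<omega>. \<bar>qG \<omega> - mG\<bar>) \<le> R" using Ez by (simp add: R_def)
  then have "measure_pmf.expectation Q (\<lambda>\<omega>. \<bar>qq \<omega> y - P y\<bar>) \<le> 2 * mB + R" using fin by linarith
  then show ?thesis by (simp add: R_def mB_eq)
qed

end

context chan
begin

lemma infsum_qq: "(\<Sum>\<^sub>\<infinity>y. qq \<omega> y) = 1"
proof -
  have "(\<Sum>\<^sub>\<infinity>y. qq \<omega> y) = (\<Sum>\<^sub>\<infinity>y. (\<Sum>i<M. w (\<omega> i) y) * inverse M)"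
    by (simp add: qq_def divide_inverse)
  also have "\<dots> = (\<Sum>\<^sub>\<infinity>y. (\<Sum>i<M. w (\<omega> i) y)) * inverse M"
    by (rule infsum_cmult_left')
  also have "(\<Sum>\<^sub>\<infinity>y. (\<Sum>i<M. w (\<omega> i) y)) = (\<Sum>i<M. \<Sum>\<^sub>\<infinity>y. w (\<omega> i) y)"
    using infsum_sum_finite[of "{..<M}" "\<lambda>i y. w (\<omega> i) y" UNIV] by (simp add: pmf_summable_on)
  also have "\<dots> = M" by (simp add: infsum_pmf_1)
  finally show ?thesis using M_pos by simp
qed

definition eps :: "(nat \<Rightarrow> 'x) \<Rightarrow> real" where
  "eps \<omega> = (\<Sum>\<^sub>\<infinity>y. \<bar>qq \<omega> y - P y\<bar>)"

lemma eps_summable: "(\<lambda>y. \<bar>qq \<omega> y - P y\<bar>) summable_on UNIV"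
proof (rule summable_on_comparison_test)
  show "(\<lambda>y. qq \<omega> y + P y) summable_on UNIV"
    by (intro summable_on_add qq_summable sumP(1))
  show "\<bar>qq \<omega> y - P y\<bar> \<le> qq \<omega> y + P y" for y
    using qq_nonneg[of \<omega> y] P_nonneg[of y] by (simp add: abs_le_iff)
qed auto

lemma eps_bd: "0 \<le> eps \<omega>" "eps \<omega> \<le> 2"
proof -
  show "0 \<le> eps \<omega>" unfolding eps_def by (intro infsum_nonneg) auto
  have "eps \<omega> \<le> (\<Sum>\<^sub>\<infinity>y. qq \<omega> y + P y)"
    unfolding eps_def
    by (intro infsum_mono eps_summable summable_on_add qq_summable sumP(1))
       (use qq_nonneg[of \<omega>] P_nonneg in \<open>auto simp: abs_le_iff\<close>)
  also have "\<dots> = 2" by (simp add: infsum_add qq_summable sumP infsum_qq)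
  finally show "eps \<omega> \<le> 2" .
qed

lemma eps_code_eq: "eps_code W (map \<omega> [0..<M]) p = eps \<omega>"
  by (simp add: eps_code_def eps_def code_out_qq)

lemma E_eps_le:
  assumes C: "0 \<le> C" and c: "0 < c"
  shows "measure_pmf.expectation Q eps \<le> 2 * delta p W C + (c * delta' p W C / M + 1 / c) / 2"
proof -
  define a1 a2 a3 where "a1 = (2::real)" "a2 = c / (2 * M)" "a3 = 1 / (2 * c)"
  have a0: "0 \<le> a1" "0 \<le> a2" "0 \<le> a3" using c by (auto simp: a1_a2_a3_def)
  define Pb where "Pb y = (\<Sum>\<^sub>\<infinity>x. pmf p x * bb C x y)" for y
  define D where "D y = (\<Sum>\<^sub>\<infinity>x. pmf p x * dd C x y)" for y
  define Bnd where "Bnd y = a1 * Pb y + a2 * D y + a3 * P y" for y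
  have Pb0: "0 \<le> Pb y" for y unfolding Pb_def by (intro infsum_nonneg) (simp add: bb_nonneg)
  have D0: "0 \<le> D y" for y unfolding D_def by (intro infsum_nonneg) (simp add: dd_nonneg)
  have Bnd0: "0 \<le> Bnd y" for y unfolding Bnd_def using a0 Pb0 D0 P_nonneg by simp
  have sPb: "Pb summable_on UNIV" unfolding Pb_def by (rule delta_eq(2))
  have sD: "D summable_on UNIV" unfolding D_def by (rule delta'_eq(2)[OF C])
  have sBnd: "Bnd summable_on UNIV" unfolding Bnd_def
    by (intro summable_on_add summable_on_cmult_right sPb sD sumP(1))
  have sumBnd: "(\<Sum>\<^sub>\<infinity>y. Bnd y) = a1 * delta p W C + a2 * delta' p W C + a3"
  proof -
    have "(\<Sum>\<^sub>\<infinity>y. Bnd y) = (\<Sum>\<^sub>\<infinity>y. a1 * Pb y + a2 * D y) + (\<Sum>\<^sub>\<infinity>y. a3 * P y)"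
      unfolding Bnd_def
      by (intro infsum_add summable_on_add summable_on_cmult_right sPb sD sumP(1))
    also have "(\<Sum>\<^sub>\<infinity>y. a1 * Pb y + a2 * D y) = (\<Sum>\<^sub>\<infinity>y. a1 * Pb y) + (\<Sum>\<^sub>\<infinity>y. a2 * D y)"
      by (intro infsum_add summable_on_cmult_right sPb sD)
    finally show ?thesis
      by (simp add: infsum_cmult_right' sumP(2) Pb_def D_def delta_eq(1) delta'_eq(1)[OF C])
  qed
  have py: "measure_pmf.expectation Q (\<lambda>\<omega>. \<bar>qq \<omega> y - P y\<bar>) \<le> Bnd y" for y
  proof -
    have "2 * Pb y + (c * D y / M + P y / c) / 2 = Bnd y"
      unfolding Bnd_def a1_a2_a3_def using c M_pos by (simp add: field_simps)
    then show ?thesis using per_y[OF C c, of y] by (simp add: Pb_def D_def)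
  qed
  have int_eps: "integrable (measure_pmf Q) eps"
    by (rule integrable_pmf_bdd[of _ 2]) (use eps_bd in \<open>auto simp: abs_le_iff\<close>)
  have int_y: "integrable (measure_pmf Q) (\<lambda>\<omega>. \<bar>qq \<omega> y - P y\<bar>)" for y
  proof (rule integrable_pmf_bdd[of _ 2])
    fix \<omega> show "\<bar>\<bar>qq \<omega> y - P y\<bar>\<bar> \<le> 2"
      using qq_nonneg[of \<omega> y] qq_le1[of \<omega> y] P_nonneg[of y] P_le1[of y] by (simp add: abs_le_iff)
  qed
  have "ennreal (measure_pmf.expectation Q eps) = (\<integral>\<^sup>+\<omega>. ennreal (eps \<omega>) \<partial>Q)"
    by (rule nn_integral_eq_integral[symmetric]) (use int_eps eps_bd in auto)
  also have "\<dots> = (\<integral>\<^sup>+\<omega>. \<integral>\<^sup>+y. ennreal \<bar>qq \<omega> y - P y\<bar> \<partial>count_space UNIV \<partial>Q)"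
    unfolding eps_def by (intro nn_integral_cong ennreal_infsum_nn eps_summable) auto
  also have "\<dots> = (\<integral>\<^sup>+y. \<integral>\<^sup>+\<omega>. ennreal \<bar>qq \<omega> y - P y\<bar> \<partial>Q \<partial>count_space UNIV)"
    by (rule nn_integral_count_space_nn_integral) auto
  also have "\<dots> = (\<integral>\<^sup>+y. ennreal (measure_pmf.expectation Q (\<lambda>\<omega>. \<bar>qq \<omega> y - P y\<bar>)) \<partial>count_space UNIV)"
    by (intro nn_integral_cong nn_integral_eq_integral int_y) auto
  also have "\<dots> \<le> (\<integral>\<^sup>+y. ennreal (Bnd y) \<partial>count_space UNIV)"
    by (intro nn_integral_mono ennreal_leI py)
  also have "\<dots> = ennreal (\<Sum>\<^sub>\<infinity>y. Bnd y)"
    by (rule ennreal_infsum_nn[symmetric, OF sBnd]) (simp add: Bnd0)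
  finally have "measure_pmf.expectation Q eps \<le> (\<Sum>\<^sub>\<infinity>y. Bnd y)"
    by (subst (asm) ennreal_le_iff) (auto intro: infsum_nonneg Bnd0)
  also have "\<dots> = 2 * delta p W C + (c * delta' p W C / M + 1 / c) / 2"
    unfolding sumBnd a1_a2_a3_def using c M_pos by (simp add: field_simps)
  finally show ?thesis .
qed

lemma claim1:
  assumes C: "0 \<le> C"
  shows "\<exists>xs. length xs = M \<and> eps_code W xs p \<le> 2 * delta p W C + sqrt (delta' p W C / M)"
proof -
  define d where "d = delta p W C"
  define d' where "d' = delta' p W C"
  define e where "e = measure_pmf.expectation Q eps"
  have d'0: "0 \<le> d'" unfolding d'_def delta'_def
    by (intro infsum_nonneg mult_nonneg_nonneg) (auto intro!: infsum_nonneg divide_nonneg_nonneg P_nonneg)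
  have ec: "e \<le> 2 * d + (c * d' / M + 1 / c) / 2" if "0 < c" for c
    unfolding e_def d_def d'_def by (rule E_eps_le[OF C that])
  have "e \<le> 2 * d + sqrt (d' / M)"
  proof (cases "d' = 0")
    case True
    show ?thesis
    proof (rule ccontr)
      assume "\<not> ?thesis"
      then have gt: "e - 2 * d > 0" using True by simp
      have "e \<le> 2 * d + (e - 2 * d) / 2"
        using ec[of "1 / (e - 2 * d)"] gt True by simp
      moreover have "(e - 2 * d) / 2 = e / 2 - d" by (simp add: diff_divide_distrib)
      ultimately show False using gt by linarith
    qed
  next
    case False
    define s where "s = sqrt (d' / M)"
    have s0: "s > 0" using False d'0 M_pos by (simp add: s_def)
    have ss: "s * s = d' / M" using d'0 M_pos by (simp add: s_def)
    have "e \<le> 2 * d + ((1 / s) * d' / M + 1 / (1 / s)) / 2"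
      using ec[of "1 / s"] s0 by simp
    also have "(1 / s) * d' / M = s"
    proof -
      have "(1 / s) * d' / M = (1 / s) * (d' / M)" by simp
      also have "\<dots> = (1 / s) * (s * s)" using ss by simp
      also have "\<dots> = s" using s0 by simp
      finally show ?thesis .
    qed
    finally show ?thesis using s0 by (simp add: s_def)
  qed
  then obtain \<omega> where "\<omega> \<in> set_pmf Q" "eps \<omega> \<le> 2 * d + sqrt (d' / M)"
  proof -
    have ie: "integrable (measure_pmf Q) eps"
      by (rule integrable_pmf_bdd[of _ 2]) (use eps_bd in \<open>auto simp: abs_le_iff\<close>)
    have "measure_pmf.expectation Q eps \<le> 2 * d + sqrt (d' / M)"
      using \<open>e \<le> 2 * d + sqrt (d' / M)\<close> by (simp add: e_def)
    then show ?thesis using QM_exists_le[OF ie] that by blast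
  qed
  then show ?thesis
    by (intro exI[of _ "map \<omega> [0..<M]"]) (simp add: eps_code_eq d_def d'_def)
qed

end

lemma wlnz_bd:
  fixes w z L U :: real
  assumes w0: "0 \<le> w" and w1: "w \<le> 1" and L: "0 < L" and zl: "w / L \<le> z" and zu: "z \<le> U" and U: "0 < U"
  shows "\<bar>w * ln z\<bar> \<le> 1 + \<bar>ln L\<bar> + U"
proof (cases "w = 0")
  case True
  then show ?thesis using U by simp
next
  case False
  then have wp: "w > 0" using w0 by simp
  then have zp: "z > 0" using zl L by (smt (verit) divide_pos_pos)
  have up: "w * ln z \<le> U"
  proof (cases "ln z \<ge> 0")
    case True
    have "w * ln z \<le> 1 * ln z" using True w1 by (intro mult_right_mono) auto
    also have "\<dots> \<le> z - 1" using ln_le_minus_one[OF zp] by simp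
    finally show ?thesis using zu by simp
  next
    case False
    then have "w * ln z \<le> 0" using wp by (simp add: mult_nonneg_nonpos)
    then show ?thesis using U by simp
  qed
  have wl: "0 < w / L" using wp L by simp
  have "ln (w / L) \<le> ln z" using zl wl zp by (simp add: ln_le_cancel_iff)
  then have "ln w - ln L \<le> ln z" using wp L by (simp add: ln_div)
  then have "w * (ln w - ln L) \<le> w * ln z" using wp by (intro mult_left_mono) auto
  moreover have "w * ln w \<ge> w - 1"
  proof -
    have "ln (1 / w) \<le> 1 / w - 1" using wp by (intro ln_le_minus_one) simp
    then have "- ln w \<le> 1 / w - 1" using wp by (simp add: ln_div)
    then have "w * (- ln w) \<le> w * (1 / w - 1)" using wp by (intro mult_left_mono) auto
    then show ?thesis using wp by (simp add: algebra_simps)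
  qed
  moreover have "w * ln L \<le> \<bar>ln L\<bar>"
  proof -
    have "w * ln L \<le> w * \<bar>ln L\<bar>" using wp by (intro mult_left_mono) auto
    also have "\<dots> \<le> 1 * \<bar>ln L\<bar>" using w1 by (intro mult_right_mono) auto
    finally show ?thesis by simp
  qed
  ultimately have lo: "- 1 - \<bar>ln L\<bar> \<le> w * ln z" using w0 by (simp add: algebra_simps)
  have "0 \<le> \<bar>ln L\<bar>" by simp
  then show ?thesis using up lo U by (simp add: abs_le_iff)
qed

lemma sum_if_eq:
  fixes A B :: real
  assumes "i < M"
  shows "(\<Sum>j<M. if j = i then A else B) = A + (real M - 1) * B"
proof -
  have "(\<Sum>j<M. if j = i then A else B) = (\<Sum>j<M. B + (if j = i then A - B else 0))"
    by (intro sum.cong) auto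
  also have "\<dots> = M * B + (A - B)"
    using assms by (simp add: sum.distrib)
  finally show ?thesis by (simp add: algebra_simps)
qed

context chan
begin

definition aa :: "'y \<Rightarrow> 'x \<Rightarrow> real" where
  "aa y x = (w x y + (real M - 1) * P y) / (real M * P y)"

definition TT :: "nat \<Rightarrow> (nat \<Rightarrow> 'x) \<Rightarrow> 'y \<Rightarrow> real" where
  "TT i \<omega> y = w (\<omega> i) y * ln (qq \<omega> y / P y)"

lemma aa_lower: "P y > 0 \<Longrightarrow> w x y / (M * P y) \<le> aa y x"
  using M_pos P_nonneg[of y] by (auto simp: aa_def intro!: divide_right_mono)

lemma aa_upper: "P y > 0 \<Longrightarrow> aa y x \<le> 1 / P y + 1"
proof -
  assume Pp: "P y > 0"
  have "w x y + (real M - 1) * P y \<le> 1 + real M * P y"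
    using pmf_le_1[of "W x" y] Pp by (simp add: algebra_simps)
  then have "aa y x \<le> (1 + real M * P y) / (real M * P y)"
    unfolding aa_def using Pp M_pos by (intro divide_right_mono) auto
  also have "\<dots> = 1 / (real M * P y) + 1" using Pp M_pos by (simp add: field_simps)
  also have "\<dots> \<le> 1 / P y + 1"
    using Pp M_pos by (intro add_right_mono divide_left_mono) auto
  finally show ?thesis .
qed

lemma aa_pos: "P y > 0 \<Longrightarrow> w x y > 0 \<Longrightarrow> aa y x > 0"
  using M_pos by (auto simp: aa_def intro!: divide_pos_pos add_pos_nonneg)

lemma qq_ge: "i < M \<Longrightarrow> w (\<omega> i) y / M \<le> qq \<omega> y"
proof -
  assume i: "i < M"
  have "w (\<omega> i) y \<le> (\<Sum>j<M. w (\<omega> j) y)"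
    using i by (intro member_le_sum) auto
  then show ?thesis unfolding qq_def using M_pos by (intro divide_right_mono) auto
qed

lemma E_TT:
  assumes Pp: "P y > 0" and i: "i < M"
  shows "measure_pmf.expectation Q (\<lambda>\<omega>. TT i \<omega> y)
         \<le> measure_pmf.expectation p (\<lambda>x. w x y * ln (aa y x))"
proof -
  define K where "K = 1 + \<bar>ln (M * P y)\<bar> + (1 / P y + 1)"
  define gf where "gf x = w x y / aa y x" for x
  have MP: "real M * P y > 0" using M_pos Pp by simp
  have U0: "0 < 1 / P y + 1" by (metis Pp add_pos_pos divide_pos_pos zero_less_one)
  have gf0: "0 \<le> gf x" for x unfolding gf_def aa_def using M_pos P_nonneg[of y] by simp
  have gfM: "gf x \<le> M * P y" for x
  proof (cases "w x y = 0")
    case True then show ?thesis using MP by (simp add: gf_def)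
  next
    case False
    then have wp: "w x y > 0" using pmf_nonneg[of "W x" y] by linarith
    have ap: "aa y x > 0" by (rule aa_pos[OF Pp wp])
    have "w x y \<le> (M * P y) * aa y x"
      using aa_lower[OF Pp, of x] MP by (simp add: divide_le_eq mult.commute)
    then show ?thesis unfolding gf_def using ap by (simp add: divide_le_eq)
  qed
  have gfB: "gf x \<le> max (M * P y) 1" for x using gfM[of x] by simp
  have w1B: "w x y \<le> max (M * P y) 1" for x using pmf_le_1[of "W x" y] by simp
  have gfaa: "gf x * aa y x = w x y" for x
  proof (cases "w x y = 0")
    case True then show ?thesis by (simp add: gf_def)
  next
    case False
    then have "aa y x > 0" using aa_pos[OF Pp] pmf_nonneg[of "W x" y] by force
    then show ?thesis by (simp add: gf_def)
  qed
  have bd_wln: "\<bar>w x y * ln (aa y x)\<bar> \<le> K" for x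
    unfolding K_def
    by (rule wlnz_bd[OF pmf_nonneg pmf_le_1 MP aa_lower[OF Pp] aa_upper[OF Pp] U0])
  have bd_T: "\<bar>TT i \<omega> y\<bar> \<le> K" for \<omega>
    unfolding K_def TT_def
  proof (rule wlnz_bd[OF pmf_nonneg pmf_le_1 MP])
    show "w (\<omega> i) y / (real M * P y) \<le> qq \<omega> y / P y"
      using qq_ge[OF i, of \<omega> y] Pp by (simp add: field_simps)
    have "qq \<omega> y / P y \<le> 1 / P y" using qq_le1[of \<omega> y] Pp by (intro divide_right_mono) auto
    then show "qq \<omega> y / P y \<le> 1 / P y + 1" by simp
  qed (rule U0)
  have int_T: "integrable (measure_pmf Q) (\<lambda>\<omega>. TT i \<omega> y)" by (rule integrable_pmf_bdd[OF bd_T])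
  have int_wln: "integrable (measure_pmf Q) (\<lambda>\<omega>. w (\<omega> i) y * ln (aa y (\<omega> i)))"
    by (rule integrable_pmf_bdd[OF bd_wln])
  have int_w: "integrable (measure_pmf Q) (\<lambda>\<omega>. w (\<omega> i) y)"
    by (rule integrable_pmf_bdd[of _ 1]) (simp add: pmf_le_1)
  have gw_bd: "\<bar>gf a * w b y\<bar> \<le> M * P y" for a b
  proof -
    have "\<bar>gf a * w b y\<bar> = gf a * w b y" using gf0[of a] by simp
    also have "\<dots> \<le> gf a * 1" using gf0[of a] pmf_le_1[of "W b" y] by (intro mult_left_mono) auto
    also have "\<dots> \<le> M * P y" using gfM[of a] by simp
    finally show ?thesis .
  qed
  have int_gw: "integrable (measure_pmf Q) (\<lambda>\<omega>. gf (\<omega> i) * w (\<omega> j) y)" for j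
    by (rule integrable_pmf_bdd[of _ "M * P y"]) (rule gw_bd)
  have eq_gq: "gf (\<omega> i) * (qq \<omega> y / P y) = (\<Sum>j<M. gf (\<omega> i) * w (\<omega> j) y) / (M * P y)" for \<omega>
    by (simp add: qq_def sum_distrib_left)
  have int_gq: "integrable (measure_pmf Q) (\<lambda>\<omega>. gf (\<omega> i) * (qq \<omega> y / P y))"
    unfolding eq_gq using int_gw by simp
  have pw: "TT i \<omega> y \<le> w (\<omega> i) y * ln (aa y (\<omega> i)) + gf (\<omega> i) * (qq \<omega> y / P y) - w (\<omega> i) y" for \<omega>
  proof (cases "w (\<omega> i) y = 0")
    case True then show ?thesis by (simp add: TT_def gf_def)
  next
    case False
    then have wp: "w (\<omega> i) y > 0" using pmf_nonneg[of "W (\<omega> i)" y] by linarith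
    have ap: "aa y (\<omega> i) > 0" by (rule aa_pos[OF Pp wp])
    have "qq \<omega> y > 0" using qq_ge[OF i, of \<omega> y] wp M_pos by (smt (verit) divide_pos_pos of_nat_0_less_iff)
    then have zp: "qq \<omega> y / P y > 0" using Pp by simp
    have "ln (qq \<omega> y / P y) \<le> ln (aa y (\<omega> i)) + (qq \<omega> y / P y) / aa y (\<omega> i) - 1"
      by (rule ln_tangent[OF zp ap])
    then have "w (\<omega> i) y * ln (qq \<omega> y / P y) \<le> w (\<omega> i) y * (ln (aa y (\<omega> i)) + (qq \<omega> y / P y) / aa y (\<omega> i) - 1)"
      using wp by (intro mult_left_mono) auto
    then show ?thesis by (simp add: TT_def gf_def algebra_simps)
  qed
  have Egq: "measure_pmf.expectation Q (\<lambda>\<omega>. gf (\<omega> i) * (qq \<omega> y / P y)) = P y"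
  proof -
    have ij: "measure_pmf.expectation Q (\<lambda>\<omega>. gf (\<omega> i) * w (\<omega> j) y)
        = (if j = i then measure_pmf.expectation p (\<lambda>x. gf x * w x y)
           else measure_pmf.expectation p gf * P y)" if j: "j < M" for j
    proof (cases "j = i")
      case True then show ?thesis using QM_exp1[OF i, where f="\<lambda>x. gf x * w x y" and p=p] by simp
    next
      case False
      then show ?thesis
        using QM_exp2[OF i j _ gf0 gfB pmf_nonneg w1B, where p=p] by (simp add: P_exp)
    qed
    have "measure_pmf.expectation Q (\<lambda>\<omega>. gf (\<omega> i) * (qq \<omega> y / P y))
        = (\<Sum>j<M. measure_pmf.expectation Q (\<lambda>\<omega>. gf (\<omega> i) * w (\<omega> j) y)) / (M * P y)"
      unfolding eq_gq using int_gw by (simp add: integral_sum)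
    also have "\<dots> = (\<Sum>j<M. if j = i then measure_pmf.expectation p (\<lambda>x. gf x * w x y)
           else measure_pmf.expectation p gf * P y) / (M * P y)"
      by (intro arg_cong[where f="\<lambda>t. t / _"] sum.cong refl) (simp add: ij)
    also have "\<dots> = (measure_pmf.expectation p (\<lambda>x. gf x * w x y) + (real M - 1) * (measure_pmf.expectation p gf * P y)) / (M * P y)"
      by (simp add: sum_if_eq[OF i])
    also have "measure_pmf.expectation p (\<lambda>x. gf x * w x y) + (real M - 1) * (measure_pmf.expectation p gf * P y)
        = measure_pmf.expectation p (\<lambda>x. gf x * (w x y + (real M - 1) * P y))"
    proof -
      have i1: "integrable (measure_pmf p) (\<lambda>x. gf x * w x y)"
        by (rule integrable_pmf_bdd[of _ "M * P y"]) (rule gw_bd)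
      have i2: "integrable (measure_pmf p) gf"
        by (rule integrable_pmf_bdd[of _ "M * P y"]) (use gf0 gfM in auto)
      show ?thesis using i1 i2 by (simp add: distrib_left algebra_simps)
    qed
    also have "\<dots> = measure_pmf.expectation p (\<lambda>x. (real M * P y) * w x y)"
    proof (intro Bochner_Integration.integral_cong refl)
      fix x
      have MP': "real M * P y \<noteq> 0" using M_pos Pp by simp
      have "aa y x * (real M * P y) = w x y + (real M - 1) * P y"
        unfolding aa_def using MP' by simp
      then have "gf x * (w x y + (real M - 1) * P y) = gf x * aa y x * (real M * P y)"
        by (simp add: mult.assoc)
      then show "gf x * (w x y + (real M - 1) * P y) = (real M * P y) * w x y" by (simp add: gfaa)
    qed
    also have "\<dots> = (real M * P y) * P y" by (simp add: P_exp)
    finally show ?thesis using M_pos Pp by simp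
  qed
  have "measure_pmf.expectation Q (\<lambda>\<omega>. TT i \<omega> y)
     \<le> measure_pmf.expectation Q (\<lambda>\<omega>. w (\<omega> i) y * ln (aa y (\<omega> i)) + gf (\<omega> i) * (qq \<omega> y / P y) - w (\<omega> i) y)"
    by (intro integral_mono int_T pw) (use int_wln int_gq int_w in auto)
  also have "\<dots> = measure_pmf.expectation Q (\<lambda>\<omega>. w (\<omega> i) y * ln (aa y (\<omega> i)))
       + measure_pmf.expectation Q (\<lambda>\<omega>. gf (\<omega> i) * (qq \<omega> y / P y)) - measure_pmf.expectation Q (\<lambda>\<omega>. w (\<omega> i) y)"
    using int_wln int_gq int_w by simp
  also have "\<dots> = measure_pmf.expectation p (\<lambda>x. w x y * ln (aa y x))"
    using Egq QM_exp1[OF i, where f="\<lambda>x. w x y * ln (aa y x)" and p=p] QM_exp1[OF i, where f="\<lambda>x. w x y" and p=p]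
    by (simp add: P_exp)
  finally show ?thesis .
qed

end

context chan
begin

definition Yp :: "'y set" where "Yp = {y. P y > 0}"

definition Dp :: "(nat \<Rightarrow> 'x) \<Rightarrow> real" where
  "Dp \<omega> = (\<Sum>y\<in>Yp. (\<Sum>i<M. TT i \<omega> y) / M)"

definition RR :: real where
  "RR = (\<Sum>y\<in>Yp. \<Sum>\<^sub>\<infinity>x. pmf p x * (w x y * ln (aa y x)))"

lemma int_TT:
  assumes Pp: "P y > 0" and i: "i < M"
  shows "integrable (measure_pmf Q) (\<lambda>\<omega>. TT i \<omega> y)"
proof -
  have MP: "real M * P y > 0" using M_pos Pp by simp
  have U0: "0 < 1 / P y + 1" by (metis Pp add_pos_pos divide_pos_pos zero_less_one)
  have bd_T: "\<bar>TT i \<omega> y\<bar> \<le> 1 + \<bar>ln (M * P y)\<bar> + (1 / P y + 1)" for \<omega>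
    unfolding TT_def
  proof (rule wlnz_bd[OF pmf_nonneg pmf_le_1 MP])
    show "w (\<omega> i) y / (real M * P y) \<le> qq \<omega> y / P y"
      using qq_ge[OF i, of \<omega> y] Pp by (simp add: field_simps)
    have "qq \<omega> y / P y \<le> 1 / P y" using qq_le1[of \<omega> y] Pp by (intro divide_right_mono) auto
    then show "qq \<omega> y / P y \<le> 1 / P y + 1" by simp
  qed (rule U0)
  show ?thesis by (rule integrable_pmf_bdd[OF bd_T])
qed

lemma wln_bd:
  assumes Pp: "P y > 0"
  shows "\<bar>w x y * ln (aa y x)\<bar> \<le> 1 + \<bar>ln (M * P y)\<bar> + (1 / P y + 1)"
proof -
  have MP: "real M * P y > 0" using M_pos Pp by simp
  have U0: "0 < 1 / P y + 1" by (metis Pp add_pos_pos divide_pos_pos zero_less_one)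
  show ?thesis
    by (rule wlnz_bd[OF pmf_nonneg pmf_le_1 MP aa_lower[OF Pp] aa_upper[OF Pp] U0])
qed

context
  assumes finY: "finite (UNIV :: 'y set)"
begin

lemma finYp: "finite Yp" using finY by (rule finite_subset[rotated]) simp

lemma iS: "y \<in> Yp \<Longrightarrow> integrable (measure_pmf Q) (\<lambda>\<omega>. (\<Sum>i<M. TT i \<omega> y) / M)"
  by (intro integrable_divide_zero Bochner_Integration.integrable_sum int_TT) (auto simp: Yp_def)

lemma intD: "integrable (measure_pmf Q) Dp"
  unfolding Dp_def by (intro Bochner_Integration.integrable_sum iS)

lemma E_Dp: "measure_pmf.expectation Q Dp \<le> RR"
proof -
  have "measure_pmf.expectation Q Dp = (\<Sum>y\<in>Yp. measure_pmf.expectation Q (\<lambda>\<omega>. (\<Sum>i<M. TT i \<omega> y) / M))"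
    unfolding Dp_def by (rule Bochner_Integration.integral_sum) (rule iS)
  also have "\<dots> = (\<Sum>y\<in>Yp. (\<Sum>i<M. measure_pmf.expectation Q (\<lambda>\<omega>. TT i \<omega> y)) / M)"
  proof (intro sum.cong refl)
    fix y assume y: "y \<in> Yp"
    have "measure_pmf.expectation Q (\<lambda>\<omega>. (\<Sum>i<M. TT i \<omega> y) / M)
        = measure_pmf.expectation Q (\<lambda>\<omega>. (\<Sum>i<M. TT i \<omega> y)) / M" by simp
    also have "\<dots> = (\<Sum>i<M. measure_pmf.expectation Q (\<lambda>\<omega>. TT i \<omega> y)) / M"
      using y by (subst Bochner_Integration.integral_sum) (auto simp: Yp_def int_TT)
    finally show "measure_pmf.expectation Q (\<lambda>\<omega>. (\<Sum>i<M. TT i \<omega> y) / M)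
        = (\<Sum>i<M. measure_pmf.expectation Q (\<lambda>\<omega>. TT i \<omega> y)) / M" .
  qed
  also have "\<dots> \<le> (\<Sum>y\<in>Yp. (\<Sum>i<M. measure_pmf.expectation p (\<lambda>x. w x y * ln (aa y x))) / M)"
    by (intro sum_mono divide_right_mono E_TT) (auto simp: Yp_def)
  also have "\<dots> = (\<Sum>y\<in>Yp. measure_pmf.expectation p (\<lambda>x. w x y * ln (aa y x)))"
    using M_pos by simp
  also have "\<dots> = RR"
    unfolding RR_def
    by (intro sum.cong refl expectation_infsum) (auto simp: Yp_def intro: wln_bd)
  finally show ?thesis .
qed

lemma exists_D: "\<exists>xs. length xs = M \<and> D_code W xs p \<le> ereal RR"
proof -
  obtain \<omega> where om: "\<omega> \<in> set_pmf Q" "Dp \<omega> \<le> RR"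
    using QM_exists_le[OF intD E_Dp] by blast
  have noinf: "\<not> (\<exists>y. qq \<omega> y > 0 \<and> P y = 0)"
    using qq_support[OF om(1)] by force
  define F where "F y = (if qq \<omega> y = 0 then 0 else qq \<omega> y * ln (qq \<omega> y / P y))" for y
  have "D_code W (map \<omega> [0..<M]) p = ereal (\<Sum>\<^sub>\<infinity>y. F y)"
    using noinf by (simp add: D_code_def KL_def code_out_qq F_def)
  also have "(\<Sum>\<^sub>\<infinity>y. F y) = (\<Sum>y\<in>UNIV. F y)" using finY by simp
  also have "\<dots> = (\<Sum>y\<in>Yp. F y)"
  proof (rule sum.mono_neutral_right[OF finY])
    show "\<forall>y\<in>UNIV - Yp. F y = 0"
    proof
      fix y assume "y \<in> UNIV - Yp"
      then have "\<not> P y > 0" by (simp add: Yp_def)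
      then have "\<not> qq \<omega> y > 0" using qq_support[OF om(1)] by blast
      then have "qq \<omega> y = 0" using qq_nonneg[of \<omega> y] by simp
      then show "F y = 0" by (simp add: F_def)
    qed
  qed simp
  also have "\<dots> = Dp \<omega>"
    unfolding Dp_def
  proof (intro sum.cong refl)
    fix y assume "y \<in> Yp"
    show "F y = (\<Sum>i<M. TT i \<omega> y) / M"
    proof (cases "qq \<omega> y = 0")
      case True
      then have "w (\<omega> i) y = 0" if "i < M" for i using qq_zero that by blast
      then show ?thesis using True by (simp add: F_def TT_def)
    next
      case False
      have "qq \<omega> y * ln (qq \<omega> y / P y) = (\<Sum>i<M. TT i \<omega> y) / M"
        by (simp add: qq_def TT_def sum_distrib_right)
      then show ?thesis using False by (simp add: F_def)
    qed
  qed
  finally show ?thesis using om(2)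
    by (intro exI[of _ "map \<omega> [0..<M]"]) auto
qed

end
end

lemma entropy_bound:
  fixes b :: "'a \<Rightarrow> real"
  assumes fin: "finite A" and b0: "\<And>y. y \<in> A \<Longrightarrow> 0 \<le> b y"
  shows "(\<Sum>y\<in>A. if b y = 0 then 0 else - b y * ln (b y))
         \<le> eta (\<Sum>y\<in>A. b y) + (\<Sum>y\<in>A. b y) * ln (real (card A))"
proof -
  define S where "S = (\<Sum>y\<in>A. b y)"
  have S0: "0 \<le> S" unfolding S_def by (intro sum_nonneg b0)
  show ?thesis
  proof (cases "S = 0")
    case True
    have "\<forall>x\<in>A. b x = 0" using sum_nonneg_eq_0_iff[of A b] fin b0 True by (simp add: S_def)
    then have "b y = 0" if "y \<in> A" for y using that by blast
    then show ?thesis using True by (simp add: S_def eta_def)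
  next
    case False
    then have Sp: "S > 0" using S0 by simp
    then have Ane: "A \<noteq> {}" unfolding S_def by auto
    then have cA: "real (card A) > 0" using fin by (simp add: card_gt_0_iff)
    define N where "N = real (card A)"
    have N0: "N > 0" using cA by (simp add: N_def)
    have pt: "(if b y = 0 then 0 else - b y * ln (b y)) \<le> b y * (ln N - ln S) + S / N - b y"
      if y: "y \<in> A" for y
    proof (cases "b y = 0")
      case True then show ?thesis using Sp N0 by simp
    next
      case False
      then have bp: "b y > 0" using b0[OF y] by simp
      have z: "S / (N * b y) > 0" using Sp N0 bp by simp
      have "ln (S / (N * b y)) \<le> S / (N * b y) - 1" by (rule ln_le_minus_one[OF z])
      then have "b y * ln (S / (N * b y)) \<le> b y * (S / (N * b y) - 1)"
        using bp by (intro mult_left_mono) auto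
      moreover have "ln (S / (N * b y)) = ln S - ln N - ln (b y)"
        using Sp N0 bp by (simp add: ln_div ln_mult)
      moreover have "b y * (S / (N * b y) - 1) = S / N - b y"
        using bp N0 by (simp add: field_simps)
      ultimately show ?thesis using False by (simp add: algebra_simps)
    qed
    have "(\<Sum>y\<in>A. if b y = 0 then 0 else - b y * ln (b y))
        \<le> (\<Sum>y\<in>A. b y * (ln N - ln S) + S / N - b y)"
      by (intro sum_mono pt)
    also have "\<dots> = S * (ln N - ln S) + card A * (S / N) - S"
      by (simp add: sum.distrib sum_subtractf sum_distrib_right[symmetric] S_def)
    also have "\<dots> = S * (ln N - ln S)" using N0 by (simp add: N_def)
    finally show ?thesis by (simp add: S_def[symmetric] N_def eta_def algebra_simps)
  qed
qed

context chan
begin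

context
  assumes finY: "finite (UNIV :: 'y set)"
begin

lemma wln_claim3:
  assumes Pp: "P y > 0"
  shows "w x y * ln (aa y x) \<le> dd C x y / M + bb C x y * (- ln (P y))"
proof (cases "w x y = 0")
  case True
  then show ?thesis by (simp add: dd_def bb_def)
next
  case False
  then have wp: "w x y > 0" using pmf_nonneg[of "W x" y] by linarith
  have ap: "aa y x > 0" by (rule aa_pos[OF Pp wp])
  have MP: "real M * P y > 0" using M_pos Pp by simp
  show ?thesis
  proof (cases "w x y \<le> C * P y")
    case True
    have "w x y * ln (aa y x) \<le> w x y * (aa y x - 1)"
      using ln_le_minus_one[OF ap] wp by (intro mult_left_mono) auto
    also have "aa y x - 1 = (w x y - P y) / (real M * P y)"
    proof -
      have MP': "real M * P y \<noteq> 0" using MP by linarith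
      show ?thesis unfolding aa_def using MP' by (simp add: field_simps)
    qed
    also have "w x y * ((w x y - P y) / (real M * P y)) \<le> (w x y)\<^sup>2 / (real M * P y)"
    proof -
      have "0 \<le> w x y * P y" using wp P_nonneg[of y] by simp
      then have "w x y * (w x y - P y) \<le> (w x y)\<^sup>2" by (simp add: power2_eq_square algebra_simps)
      then have "w x y * (w x y - P y) / (real M * P y) \<le> (w x y)\<^sup>2 / (real M * P y)"
        using MP by (intro divide_right_mono) auto
      then show ?thesis by simp
    qed
    also have "\<dots> = dd C x y / M" using True Pp by (simp add: dd_def)
    finally show ?thesis using True by (simp add: bb_def)
  next
    case False
    have le: "aa y x \<le> 1 / P y"
    proof -
      have "w x y + (real M - 1) * P y \<le> 1 + (real M - 1) * 1"
        using pmf_le_1[of "W x" y] P_le1[of y] M_pos by (intro add_mono mult_left_mono) auto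
      then have "w x y + (real M - 1) * P y \<le> real M" by simp
      then show ?thesis unfolding aa_def using MP Pp by (simp add: divide_le_eq field_simps)
    qed
    have "ln (aa y x) \<le> ln (1 / P y)" using le ap Pp by (simp add: ln_le_cancel_iff)
    then have "w x y * ln (aa y x) \<le> w x y * (- ln (P y))"
      using wp Pp by (intro mult_left_mono) (auto simp: ln_div)
    then show ?thesis using False by (simp add: bb_def dd_def)
  qed
qed

end
end

context chan
begin

context
  assumes finY: "finite (UNIV :: 'y set)"
begin

lemma RR_claim3:
  assumes C: "0 \<le> C"
  shows "RR \<le> eta (delta p W C) + delta p W C * ln (real (card (UNIV :: 'y set))) + delta' p W C / M"
proof -
  define Pb where "Pb y = (\<Sum>\<^sub>\<infinity>x. pmf p x * bb C x y)" for y
  define Dd where "Dd y = (\<Sum>\<^sub>\<infinity>x. pmf p x * dd C x y)" for y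
  have sb: "(\<lambda>x. pmf p x * bb C x y) summable_on UNIV" for y
    using swap_pw(3)[of "bb C" 1, OF bb_nonneg] bb_le by simp
  have sd: "(\<lambda>x. pmf p x * dd C x y) summable_on UNIV" for y
    using swap_pw(3)[of "dd C" C, OF dd_nonneg dd_le[OF C] C] by simp
  have Pb0: "0 \<le> Pb y" for y unfolding Pb_def by (intro infsum_nonneg) (simp add: bb_nonneg)
  have PbP: "Pb y \<le> P y" for y
    unfolding Pb_def Wp_def
    by (intro infsum_mono sb pw_summable mult_left_mono bb_le) auto
  have step1: "(\<Sum>\<^sub>\<infinity>x. pmf p x * (w x y * ln (aa y x))) \<le> Dd y / M + (- ln (P y)) * Pb y"
    if y: "y \<in> Yp" for y
  proof -
    have Pp: "P y > 0" using y by (simp add: Yp_def)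
    have "(\<Sum>\<^sub>\<infinity>x. pmf p x * (w x y * ln (aa y x)))
        \<le> (\<Sum>\<^sub>\<infinity>x. pmf p x * dd C x y * (1 / M) + pmf p x * bb C x y * (- ln (P y)))"
    proof (rule infsum_mono)
      show "(\<lambda>x. pmf p x * (w x y * ln (aa y x))) summable_on UNIV"
        by (rule pmf_bdd_summable_on) (rule wln_bd[OF Pp])
      show "(\<lambda>x. pmf p x * dd C x y * (1 / M) + pmf p x * bb C x y * (- ln (P y))) summable_on UNIV"
        by (intro summable_on_add summable_on_cmult_left sb sd)
      fix x
      have "pmf p x * (w x y * ln (aa y x)) \<le> pmf p x * (dd C x y / M + bb C x y * (- ln (P y)))"
        by (intro mult_left_mono wln_claim3[OF finY Pp]) auto
      then show "pmf p x * (w x y * ln (aa y x)) \<le> pmf p x * dd C x y * (1 / M) + pmf p x * bb C x y * (- ln (P y))"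
        by (simp add: algebra_simps)
    qed
    also have "\<dots> = (\<Sum>\<^sub>\<infinity>x. pmf p x * dd C x y * (1 / M)) + (\<Sum>\<^sub>\<infinity>x. pmf p x * bb C x y * (- ln (P y)))"
      by (rule infsum_add) (intro summable_on_cmult_left sb sd)+
    also have "\<dots> = (\<Sum>\<^sub>\<infinity>x. pmf p x * dd C x y) * (1 / M) + (\<Sum>\<^sub>\<infinity>x. pmf p x * bb C x y) * (- ln (P y))"
      by (simp only: infsum_cmult_left')
    also have "\<dots> = Dd y / M + (- ln (P y)) * Pb y"
      by (simp add: Dd_def Pb_def)
    finally show ?thesis .
  qed
  have "RR \<le> (\<Sum>y\<in>Yp. Dd y / M + (- ln (P y)) * Pb y)"
    unfolding RR_def by (intro sum_mono step1)
  also have "\<dots> = (\<Sum>y\<in>Yp. Dd y) / M + (\<Sum>y\<in>Yp. (- ln (P y)) * Pb y)"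
    by (simp only: sum.distrib sum_divide_distrib)
  also have "(\<Sum>y\<in>Yp. Dd y) = delta' p W C"
  proof -
    have "(\<Sum>y\<in>Yp. Dd y) = (\<Sum>y\<in>UNIV. Dd y)"
    proof (rule sum.mono_neutral_left[OF finY])
      show "\<forall>y\<in>UNIV - Yp. Dd y = 0"
      proof
        fix y assume "y \<in> UNIV - Yp"
        then have "\<not> P y > 0" by (simp add: Yp_def)
        then show "Dd y = 0" by (simp add: Dd_def dd_def)
      qed
    qed simp
    also have "\<dots> = (\<Sum>\<^sub>\<infinity>y. Dd y)" using finY by simp
    also have "\<dots> = delta' p W C" by (simp add: Dd_def delta'_eq(1)[OF C])
    finally show ?thesis .
  qed
  also have "(\<Sum>y\<in>Yp. (- ln (P y)) * Pb y) \<le> (\<Sum>y\<in>UNIV. if Pb y = 0 then 0 else - Pb y * ln (Pb y))"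
  proof -
    have ent0: "0 \<le> (if Pb y = 0 then 0 else - Pb y * ln (Pb y))" for y
    proof (cases "Pb y = 0")
      case False
      then have "Pb y > 0" using Pb0[of y] by simp
      moreover have "Pb y \<le> 1" using PbP[of y] P_le1[of y] by simp
      ultimately have "ln (Pb y) \<le> 0" by simp
      then show ?thesis using Pb0[of y] by (simp add: mult_nonneg_nonpos)
    qed simp
    have "(\<Sum>y\<in>Yp. (- ln (P y)) * Pb y) \<le> (\<Sum>y\<in>Yp. if Pb y = 0 then 0 else - Pb y * ln (Pb y))"
    proof (intro sum_mono)
      fix y assume y: "y \<in> Yp"
      show "(- ln (P y)) * Pb y \<le> (if Pb y = 0 then 0 else - Pb y * ln (Pb y))"
      proof (cases "Pb y = 0")
        case False
        then have bp: "Pb y > 0" using Pb0[of y] by simp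
        have "ln (Pb y) \<le> ln (P y)" using bp PbP[of y] by simp
        then have "(- ln (P y)) * Pb y \<le> (- ln (Pb y)) * Pb y" using bp by (intro mult_right_mono) auto
        then show ?thesis using False by (simp add: mult.commute)
      qed simp
    qed
    also have "\<dots> \<le> (\<Sum>y\<in>UNIV. if Pb y = 0 then 0 else - Pb y * ln (Pb y))"
      by (rule sum_mono2[OF finY]) (auto simp: ent0)
    finally show ?thesis .
  qed
  also have "(\<Sum>y\<in>UNIV. if Pb y = 0 then 0 else - Pb y * ln (Pb y))
      \<le> eta (\<Sum>y\<in>UNIV. Pb y) + (\<Sum>y\<in>UNIV. Pb y) * ln (real (card (UNIV :: 'y set)))"
    by (rule entropy_bound[OF finY Pb0])
  also have "(\<Sum>y\<in>UNIV. Pb y) = delta p W C"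
    using finY by (simp add: Pb_def delta_eq(1))
  finally show ?thesis by simp
qed

end
end

lemma holder_pmf:
  fixes a :: "'x \<Rightarrow> real" and s :: real
  assumes a0: "\<And>x. 0 \<le> a x" and a1: "\<And>x. a x \<le> 1"
    and s0: "0 < s" and s1: "s < 1"
    and Pa: "(\<Sum>\<^sub>\<infinity>x. pmf p x * a x) > 0"
  shows "(\<Sum>\<^sub>\<infinity>x. pmf p x * a x powr (1 + s))
       \<le> (\<Sum>\<^sub>\<infinity>x. pmf p x * a x powr (1 / (1 - s))) powr (1 - s) * (\<Sum>\<^sub>\<infinity>x. pmf p x * a x) powr s"
proof -
  define r where "r = 1 / (1 - s)"
  define A where "A = (\<Sum>\<^sub>\<infinity>x. pmf p x * a x powr r)"
  define B where "B = (\<Sum>\<^sub>\<infinity>x. pmf p x * a x)"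
  have r0: "r > 0" using s1 by (simp add: r_def)
  have rs: "r * (1 - s) = 1" using s1 by (simp add: r_def)
  have ar1: "\<bar>a x powr r\<bar> \<le> 1" for x using powr_le1[of r "a x"] r0 a0[of x] a1[of x] by simp
  have ab1: "\<bar>a x\<bar> \<le> 1" for x using a0[of x] a1[of x] by simp
  have sA: "(\<lambda>x. pmf p x * a x powr r) summable_on UNIV" by (rule pmf_bdd_summable_on[OF ar1])
  have sB: "(\<lambda>x. pmf p x * a x) summable_on UNIV" by (rule pmf_bdd_summable_on[OF ab1])
  have Bp: "B > 0" using Pa by (simp add: B_def)
  have Ap: "A > 0"
  proof -
    obtain x where x: "pmf p x * a x \<noteq> 0"
    proof (rule ccontr)
      assume "\<not> thesis"
      then have "\<And>x. pmf p x * a x = 0" using that by blast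
      then have "(\<lambda>x. pmf p x * a x) = (\<lambda>_. 0)" by (rule ext)
      then have "B = 0" unfolding B_def by simp
      then show False using Bp by simp
    qed
    then have "pmf p x > 0" "a x > 0" using a0[of x] pmf_nonneg[of p x]
      by (auto simp: less_le)
    then have pos: "pmf p x * a x powr r > 0" by simp
    have "sum (\<lambda>x. pmf p x * a x powr r) {x} \<le> A"
      unfolding A_def by (rule finite_sum_le_infsum[OF sA]) auto
    then show ?thesis using pos by simp
  qed
  define c where "c = A powr (1 - s) * B powr s"
  have cp: "c > 0" using Ap Bp by (simp add: c_def)
  have pw: "a x powr (1 + s) \<le> c * ((1 - s) * (a x powr r / A) + s * (a x / B))" for x
  proof (cases "a x = 0")
    case True
    then show ?thesis using cp s0 s1 Ap Bp by (simp add: r0)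
  next
    case False
    then have ap: "a x > 0" using a0[of x] by simp
    have "(a x powr r / A) powr (1 - s) * (a x / B) powr s \<le> (1 - s) * (a x powr r / A) + s * (a x / B)"
      by (rule wam_gm) (use Ap Bp s0 s1 ap in auto)
    moreover have "(a x powr r / A) powr (1 - s) * (a x / B) powr s = a x powr (1 + s) / c"
    proof -
      have "(a x powr r / A) powr (1 - s) = a x / A powr (1 - s)"
        using ap by (simp add: powr_divide powr_powr rs powr_one)
      moreover have "(a x / B) powr s = a x powr s / B powr s" by (simp add: powr_divide)
      moreover have "a x * a x powr s = a x powr (1 + s)" using ap by (simp add: powr_mult_base)
      ultimately show ?thesis by (simp add: c_def field_simps)
    qed
    ultimately have "a x powr (1 + s) / c \<le> (1 - s) * (a x powr r / A) + s * (a x / B)" by simp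
    then show ?thesis using cp by (simp add: divide_le_eq mult.commute)
  qed
  have "(\<Sum>\<^sub>\<infinity>x. pmf p x * a x powr (1 + s))
      \<le> (\<Sum>\<^sub>\<infinity>x. (pmf p x * a x powr r) * (c * (1 - s) / A) + (pmf p x * a x) * (c * s / B))"
  proof (rule infsum_mono)
    have "\<bar>a x powr (1 + s)\<bar> \<le> 1" for x using powr_le1[of "1 + s" "a x"] s0 a0[of x] a1[of x] by simp
    then show "(\<lambda>x. pmf p x * a x powr (1 + s)) summable_on UNIV" by (rule pmf_bdd_summable_on)
    show "(\<lambda>x. (pmf p x * a x powr r) * (c * (1 - s) / A) + (pmf p x * a x) * (c * s / B)) summable_on UNIV"
      by (intro summable_on_add summable_on_cmult_left sA sB)
    fix x
    have "pmf p x * a x powr (1 + s) \<le> pmf p x * (c * ((1 - s) * (a x powr r / A) + s * (a x / B)))"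
      by (intro mult_left_mono pw) auto
    then show "pmf p x * a x powr (1 + s) \<le> (pmf p x * a x powr r) * (c * (1 - s) / A) + (pmf p x * a x) * (c * s / B)"
      by (simp add: algebra_simps)
  qed
  also have "\<dots> = (\<Sum>\<^sub>\<infinity>x. (pmf p x * a x powr r) * (c * (1 - s) / A)) + (\<Sum>\<^sub>\<infinity>x. (pmf p x * a x) * (c * s / B))"
    by (rule infsum_add) (intro summable_on_cmult_left sA sB)+
  also have "\<dots> = (\<Sum>\<^sub>\<infinity>x. pmf p x * a x powr r) * (c * (1 - s) / A) + (\<Sum>\<^sub>\<infinity>x. pmf p x * a x) * (c * s / B)"
    by (simp only: infsum_cmult_left')
  also have "\<dots> = A * (c * (1 - s) / A) + B * (c * s / B)"
    by (simp only: A_def B_def)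
  also have "\<dots> = c" using Ap Bp by (simp add: field_simps)
  finally show ?thesis by (simp add: c_def A_def B_def r_def)
qed


context chan
begin

context
  assumes finY: "finite (UNIV :: 'y set)"
begin

lemma sum_Yp_P: "(\<Sum>y\<in>Yp. P y) = 1"
proof -
  have "(\<Sum>y\<in>Yp. P y) = (\<Sum>y\<in>UNIV. P y)"
  proof (rule sum.mono_neutral_left[OF finY])
    show "\<forall>y\<in>UNIV - Yp. P y = 0" using P_nonneg by (auto simp: Yp_def less_le)
  qed simp
  also have "\<dots> = (\<Sum>\<^sub>\<infinity>y. P y)" using finY by simp
  finally show ?thesis using sumP(2) by simp
qed

lemma RR_claim2:
  assumes t1: "-1/2 \<le> t" and t0: "t < 0"
  shows "RR \<le> ln (1 + real M powr t * exp (phi t W p)) / (- t)"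
proof -
  define s where "s = - t"
  have s0: "0 < s" and s1: "s < 1" using t1 t0 by (auto simp: s_def)
  define u where "u x y = w x y / (real M * P y)" for x y
  define F where "F y x = w x y * ln (1 + u x y powr s)" for y x
  define G where "G y x = w x y * u x y powr s" for y x
  define A where "A y = (\<Sum>\<^sub>\<infinity>x. pmf p x * w x y powr (1 / (1 - s)))" for y
  define S where "S = (\<Sum>y\<in>UNIV. A y powr (1 - s))"
  define K where "K = (\<Sum>y\<in>Yp. \<Sum>\<^sub>\<infinity>x. pmf p x * G y x)"
  have u0: "0 \<le> u x y" for x y unfolding u_def using P_nonneg[of y] by simp
  have ub: "u x y powr s \<le> 1 + 1 / (real M * P y)" if Pp: "P y > 0" for x y
  proof -
    have uV: "u x y \<le> 1 / (real M * P y)"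
      unfolding u_def using Pp M_pos pmf_le_1[of "W x" y] by (intro divide_right_mono) auto
    show ?thesis
    proof (cases "u x y \<le> 1")
      case True
      then have "u x y powr s \<le> 1" using u0[of x y] s0 by (intro powr_le1) auto
      moreover have "0 \<le> 1 / (real M * P y)" using Pp by simp
      ultimately show ?thesis by linarith
    next
      case False
      then have "u x y powr s \<le> u x y powr 1" using s1 by (intro powr_mono) auto
      then have "u x y powr s \<le> u x y" using u0[of x y] by (simp add: powr_one)
      then show ?thesis using uV by linarith
    qed
  qed
  have G0: "0 \<le> G y x" for y x unfolding G_def by simp
  have GB: "\<bar>G y x\<bar> \<le> 1 + 1 / (real M * P y)" if Pp: "P y > 0" for y x
  proof -
    have "G y x \<le> 1 * (1 + 1 / (real M * P y))" unfolding G_def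
      using pmf_le_1[of "W x" y] ub[OF Pp, of x] by (intro mult_mono) auto
    then show ?thesis using G0[of y x] by simp
  qed
  have F0: "0 \<le> F y x" for y x unfolding F_def by simp
  have FG: "F y x \<le> G y x" for y x
    unfolding F_def G_def by (intro mult_left_mono ln_add_one_self_le_self) auto
  have FB: "\<bar>F y x\<bar> \<le> 1 + 1 / (real M * P y)" if Pp: "P y > 0" for y x
    using F0[of y x] FG[of y x] GB[OF Pp, of x] by simp
  have sF: "(\<lambda>x. pmf p x * F y x) summable_on UNIV" if "P y > 0" for y
    by (rule pmf_bdd_summable_on[OF FB[OF that]])
  have sG: "(\<lambda>x. pmf p x * G y x) summable_on UNIV" if "P y > 0" for y
    by (rule pmf_bdd_summable_on[OF GB[OF that]])
  have K0: "0 \<le> K" unfolding K_def by (intro sum_nonneg infsum_nonneg) (simp add: G0)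
  define b where "b = 1 + K"
  have b0: "0 < b" using K0 by (simp add: b_def)
  have stepA: "w x y * ln (aa y x) \<le> F y x / s" if Pp: "P y > 0" for x y
  proof (cases "w x y = 0")
    case True then show ?thesis by (simp add: F_def)
  next
    case False
    then have wp: "w x y > 0" using pmf_nonneg[of "W x" y] by linarith
    have ap: "aa y x > 0" by (rule aa_pos[OF Pp wp])
    have "aa y x \<le> 1 + u x y"
    proof -
      have "aa y x = u x y + (real M - 1) / real M"
        unfolding aa_def u_def using M_pos Pp by (simp add: field_simps)
      also have "\<dots> \<le> u x y + 1" using M_pos by simp
      finally show ?thesis by simp
    qed
    then have "ln (aa y x) \<le> ln (1 + u x y)" using ap u0[of x y] by simp
    also have "\<dots> \<le> ln (1 + u x y powr s) / s"
    proof -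
      have "(1 + u x y) powr s \<le> 1 + u x y powr s" by (rule powr_subadd) (use u0[of x y] s0 s1 in auto)
      then have "ln ((1 + u x y) powr s) \<le> ln (1 + u x y powr s)"
        using u0[of x y] powr_ge_zero[of "u x y" s] by (subst ln_le_cancel_iff) (auto simp: add_pos_nonneg)
      then have "s * ln (1 + u x y) \<le> ln (1 + u x y powr s)" by simp
      then show ?thesis using s0 by (simp add: field_simps)
    qed
    finally have "w x y * ln (aa y x) \<le> w x y * (ln (1 + u x y powr s) / s)"
      using wp by (intro mult_left_mono) auto
    then show ?thesis by (simp add: F_def)
  qed
  have RR1: "RR \<le> (\<Sum>y\<in>Yp. \<Sum>\<^sub>\<infinity>x. pmf p x * F y x) / s"
  proof -
    have "RR \<le> (\<Sum>y\<in>Yp. \<Sum>\<^sub>\<infinity>x. pmf p x * F y x * (1 / s))"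
      unfolding RR_def
    proof (intro sum_mono infsum_mono)
      fix y assume "y \<in> Yp"
      then have Pp: "P y > 0" by (simp add: Yp_def)
      show "(\<lambda>x. pmf p x * (w x y * ln (aa y x))) summable_on UNIV"
        by (rule pmf_bdd_summable_on) (rule wln_bd[OF Pp])
      show "(\<lambda>x. pmf p x * F y x * (1 / s)) summable_on UNIV"
        by (intro summable_on_cmult_left sF Pp)
      fix x
      show "pmf p x * (w x y * ln (aa y x)) \<le> pmf p x * F y x * (1 / s)"
        using mult_left_mono[OF stepA[OF Pp, of x] pmf_nonneg[of p x]] by simp
    qed
    also have "\<dots> = (\<Sum>y\<in>Yp. (\<Sum>\<^sub>\<infinity>x. pmf p x * F y x) * (1 / s))"
      by (simp only: infsum_cmult_left')
    also have "\<dots> = (\<Sum>y\<in>Yp. \<Sum>\<^sub>\<infinity>x. pmf p x * F y x) / s"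
      by (simp add: sum_divide_distrib)
    finally show ?thesis .
  qed
  have RR2: "(\<Sum>y\<in>Yp. \<Sum>\<^sub>\<infinity>x. pmf p x * F y x) \<le> ln b"
  proof -
    define c1 where "c1 = ln b - 1 + 1 / b"
    have py: "(\<Sum>\<^sub>\<infinity>x. pmf p x * F y x) \<le> P y * c1 + (\<Sum>\<^sub>\<infinity>x. pmf p x * G y x) * (1 / b)"
      if y: "y \<in> Yp" for y
    proof -
      have Pp: "P y > 0" using y by (simp add: Yp_def)
      have pw: "F y x \<le> w x y * c1 + G y x * (1 / b)" for x
      proof (cases "w x y = 0")
        case True then show ?thesis by (simp add: F_def G_def)
      next
        case False
        then have wp: "w x y > 0" using pmf_nonneg[of "W x" y] by linarith
        have z: "1 + u x y powr s > 0" by (simp add: add_pos_nonneg)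
        have "ln (1 + u x y powr s) \<le> ln b + (1 + u x y powr s) / b - 1"
          by (rule ln_tangent[OF z b0])
        then have "w x y * ln (1 + u x y powr s) \<le> w x y * (ln b + (1 + u x y powr s) / b - 1)"
          using wp by (intro mult_left_mono) auto
        then show ?thesis by (simp add: F_def G_def c1_def algebra_simps add_divide_distrib)
      qed
      have "(\<Sum>\<^sub>\<infinity>x. pmf p x * F y x) \<le> (\<Sum>\<^sub>\<infinity>x. (pmf p x * w x y) * c1 + (pmf p x * G y x) * (1 / b))"
      proof (rule infsum_mono)
        show "(\<lambda>x. pmf p x * F y x) summable_on UNIV" by (rule sF[OF Pp])
        show "(\<lambda>x. (pmf p x * w x y) * c1 + (pmf p x * G y x) * (1 / b)) summable_on UNIV"
          by (intro summable_on_add summable_on_cmult_left pw_summable sG Pp)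
        fix x
        show "pmf p x * F y x \<le> (pmf p x * w x y) * c1 + (pmf p x * G y x) * (1 / b)"
          using mult_left_mono[OF pw[of x] pmf_nonneg[of p x]] by (simp add: algebra_simps)
      qed
      also have "\<dots> = (\<Sum>\<^sub>\<infinity>x. (pmf p x * w x y) * c1) + (\<Sum>\<^sub>\<infinity>x. (pmf p x * G y x) * (1 / b))"
        by (rule infsum_add) (intro summable_on_cmult_left pw_summable sG Pp)+
      also have "\<dots> = (\<Sum>\<^sub>\<infinity>x. pmf p x * w x y) * c1 + (\<Sum>\<^sub>\<infinity>x. pmf p x * G y x) * (1 / b)"
        by (simp only: infsum_cmult_left')
      also have "\<dots> = P y * c1 + (\<Sum>\<^sub>\<infinity>x. pmf p x * G y x) * (1 / b)"
        by (simp add: Wp_def)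
      finally show ?thesis .
    qed
    have "(\<Sum>y\<in>Yp. \<Sum>\<^sub>\<infinity>x. pmf p x * F y x) \<le> (\<Sum>y\<in>Yp. P y * c1 + (\<Sum>\<^sub>\<infinity>x. pmf p x * G y x) * (1 / b))"
      by (intro sum_mono py)
    also have "\<dots> = (\<Sum>y\<in>Yp. P y) * c1 + K * (1 / b)"
      by (simp only: sum.distrib sum_distrib_right K_def)
    also have "\<dots> = ln b"
    proof -
      have Kb: "K = b - 1" by (simp add: b_def)
      have "(b - 1) * (1 / b) = 1 - 1 / b" using b0 by (simp add: field_simps)
      then show ?thesis by (simp add: sum_Yp_P c1_def Kb)
    qed
    finally show ?thesis .
  qed
  have KS: "K \<le> S / real M powr s"
  proof -
    have py: "(\<Sum>\<^sub>\<infinity>x. pmf p x * G y x) \<le> A y powr (1 - s) / real M powr s" if y: "y \<in> Yp" for y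
    proof -
      have Pp: "P y > 0" using y by (simp add: Yp_def)
      have MP: "real M * P y > 0" using M_pos Pp by simp
      have Geq: "G y x = w x y powr (1 + s) * (1 / (real M * P y) powr s)" for x
      proof -
        have "G y x = w x y * (w x y powr s / (real M * P y) powr s)"
          by (simp add: G_def u_def powr_divide)
        also have "\<dots> = (w x y * w x y powr s) * (1 / (real M * P y) powr s)" by simp
        also have "w x y * w x y powr s = w x y powr (1 + s)" by (simp add: powr_mult_base)
        finally show ?thesis .
      qed
      have "(\<Sum>\<^sub>\<infinity>x. pmf p x * G y x) = (\<Sum>\<^sub>\<infinity>x. pmf p x * w x y powr (1 + s)) * (1 / (real M * P y) powr s)"
        unfolding Geq by (subst infsum_cmult_left'[symmetric]) (simp add: mult.assoc)
      also have "\<dots> \<le> (A y powr (1 - s) * P y powr s) * (1 / (real M * P y) powr s)"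
      proof (rule mult_right_mono)
        show "(\<Sum>\<^sub>\<infinity>x. pmf p x * w x y powr (1 + s)) \<le> A y powr (1 - s) * P y powr s"
          unfolding A_def using holder_pmf[of "\<lambda>x. w x y" s p, OF pmf_nonneg pmf_le_1 s0 s1] Pp
          by (simp add: Wp_def)
      qed simp
      also have "\<dots> = A y powr (1 - s) / real M powr s"
        using Pp M_pos by (simp add: powr_mult field_simps)
      finally show ?thesis .
    qed
    have "K \<le> (\<Sum>y\<in>Yp. A y powr (1 - s) / real M powr s)"
      unfolding K_def by (intro sum_mono py)
    also have "\<dots> \<le> (\<Sum>y\<in>UNIV. A y powr (1 - s) / real M powr s)"
      by (rule sum_mono2[OF finY]) auto
    also have "\<dots> = S / real M powr s" by (simp add: S_def sum_divide_distrib)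
    finally show ?thesis .
  qed
  have phiS: "phi t W p = ln S"
    using finY by (simp add: phi_def S_def A_def s_def)
  have Mt: "real M powr t = 1 / real M powr s"
    by (simp add: s_def powr_minus_divide)
  have "RR \<le> ln b / s" using RR1 RR2 s0 by (meson divide_right_mono less_imp_le order_trans)
  also have "ln b \<le> ln (1 + real M powr t * exp (phi t W p))"
  proof (cases "S > 0")
    case True
    have "b \<le> 1 + real M powr t * exp (phi t W p)"
      using KS True by (simp add: b_def phiS Mt)
    then show ?thesis using b0 by simp
  next
    case False
    have S0: "0 \<le> S" unfolding S_def by (intro sum_nonneg) simp
    then have "S = 0" using False by simp
    then have "K \<le> 0" using KS by simp
    then have "b = 1" using K0 by (simp add: b_def)
    moreover have "0 \<le> real M powr t * exp (phi t W p)" by simp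
    ultimately show ?thesis by simp
  qed
  then have "ln b / s \<le> ln (1 + real M powr t * exp (phi t W p)) / s"
    using s0 by (intro divide_right_mono) auto
  finally show ?thesis by (simp add: s_def)
qed

end
end
theorem theorem2:
  fixes W :: "'x::countable \<Rightarrow> 'y::countable pmf"
    and p :: "'x pmf" and M :: nat and C :: real
  assumes "M > 0" and "C > 0"
  shows "(\<exists>xs. length xs = M \<and>
            eps_code W xs p \<le> 2 * delta p W C + sqrt (delta' p W C / real M))
       \<and> delta' p W C \<le> C
       \<and> (finite (UNIV :: 'y set) \<longrightarrow>
            (\<forall>t::real. -1/2 \<le> t \<and> t < 0 \<longrightarrow>
               (\<exists>xs. length xs = M \<and>
                  D_code W xs p \<le> ereal (ln (1 + real M powr t * exp (phi t W p)) / (- t))))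
          \<and> (\<exists>xs. length xs = M \<and>
                D_code W xs p \<le> ereal (eta (delta p W C) + delta p W C * ln (real (card (UNIV :: 'y set)))
                                        + delta' p W C / real M)))"
proof -
  interpret chan W p M by unfold_locales (rule assms(1))
  have C0: "0 \<le> C" using assms(2) by simp
  have p1: "\<exists>xs. length xs = M \<and> eps_code W xs p \<le> 2 * delta p W C + sqrt (delta' p W C / real M)"
    by (rule claim1[OF C0])
  have p2: "delta' p W C \<le> C" by (rule delta'_le[OF C0])
  have p3a: "\<exists>xs. length xs = M \<and> D_code W xs p \<le> ereal (eta (delta p W C) + delta p W C * ln (real (card (UNIV :: 'y set)))
                                        + delta' p W C / real M)"
    if finY: "finite (UNIV :: 'y set)"
  proof -
    obtain xs where xs: "length xs = M" "D_code W xs p \<le> ereal RR" using exists_D[OF finY] by blast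
    show ?thesis
      using xs RR_claim3[OF finY C0] by (intro exI[of _ xs]) (auto intro: order_trans)
  qed
  have p3b: "\<exists>xs. length xs = M \<and> D_code W xs p \<le> ereal (ln (1 + real M powr t * exp (phi t W p)) / (- t))"
    if finY: "finite (UNIV :: 'y set)" and t1: "-1/2 \<le> t" and t0: "t < 0" for t :: real
  proof -
    obtain xs where xs: "length xs = M" "D_code W xs p \<le> ereal RR" using exists_D[OF finY] by blast
    show ?thesis
      using xs RR_claim2[OF finY t1 t0] by (intro exI[of _ xs]) (auto intro: order_trans)
  qed
  show ?thesis using p1 p2 p3a p3b by blast
qed

end
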